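(* Let $G$ be a countable directed graph and let $x_1\neq x_2$ be vertices of $G$. (a) If $\pi$ is any two-dimensional nest representation of $\mathcal{T}_+(G)$ with $\rho^{(1)}_\pi\in\mathfrak{M}_{G,x_1}$ and $\rho^{(2)}_\pi\in\mathfrak{M}_{G,x_2}$, then there is an edge $e\in\mathcal{E}(G)$ with $s(e)=x_1$ and $r(e)=x_2$. (b) Consequently, $\operatorname{rep}_{x_1,x_2}(\mathcal{T}_+(G))\neq\emptyset$ if and only if there exists an edge $e\in\mathcal{E}(G)$ with $s(e)=x_1$ and $r(e)=x_2$.
   Context: A countable directed graph $G$ has countable vertex set $\mathcal{V}(G)$, edge set $\mathcal{E}(G)$, range and source maps $r,s$. The free semigroupoid $\mathbb{F}^+(G)$ consists of vertices (paths of length $0$) and finite paths $w=e_k\cdots e_1$ with $s(e_i)=r(e_{i-1})$, $s(w)=s(e_1)$, $r(w)=r(e_k)$. On $\ell^2(\mathbb{F}^+(G))$ with orthonormal basis $\{\xi_w\}$, $L_e\xi_w=\xi_{ew}$ if $s(e)=r(w)$ and $0$ otherwise, and $P_v$ is the projection onto $\overline{\operatorname{span}}\{\xi_w:r(w)=v\}$. The tensor algebra $\mathcal{T}_+(G)$ is the norm-closed operator algebra generated by all $L_e$ and $P_v$. $\mathfrak{M}_G$ is the set of characters of $\mathcal{T}_+(G)$ and $\mathfrak{M}_{G,x}=\{\rho\in\mathfrak{M}_G:\rho(P_x)=1\}$. A two-dimensional nest representation is a continuous algebra homomorphism $\pi$ of $\mathcal{T}_+(G)$ onto $\operatorname{Alg}\mathcal{N}$,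 where $\mathcal{H}$ is a 2-dimensional Hilbert space, $\mathcal{N}=\{0,N,I\}$ with $N$ a one-dimensional subspace, and $\operatorname{Alg}\mathcal{N}$ is the algebra of all operators on $\mathcal{H}$ leaving $N$ invariant. Choosing unit vectors $h_2\in N$ and $h_1\in N^\perp$, set $\rho^{(i)}_\pi(A)=\langle\pi(A)h_i,h_i\rangle$, $i=1,2$ (these are characters). For $x_1\neq x_2$, $\operatorname{rep}_{x_1,x_2}(\mathcal{T}_+(G))$ is the set of two-dimensional nest representations $\pi$ with $\rho^{(i)}_\pi\in\mathfrak{M}_{G,x_i}$ for $i=1,2$. *)

theory Defs
  imports "HOL-Analysis.Analysis" "Graph_Theory.Digraph"
begin

text \<open>Directed graph: verts G = vertex set, arcs G = edge set,
  tail G = source map s, head G = range map r.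
  Finite paths w = e_k ... e_1 are represented as Inr [e_k, ..., e_1];
  the vertex v (path of length 0) is represented as Inl v.\<close>

definition fpaths :: "('a,'b) pre_digraph \<Rightarrow> ('a + 'b list) set" where
  "fpaths G = Inl ` verts G \<union>
     {Inr es | es. es \<noteq> [] \<and> set es \<subseteq> arcs G \<and>
        (\<forall>i. Suc i < length es \<longrightarrow> tail G (es ! i) = head G (es ! Suc i))}"

definition prange :: "('a,'b) pre_digraph \<Rightarrow> 'a + 'b list \<Rightarrow> 'a" where
  "prange G u = (case u of Inl v \<Rightarrow> v | Inr es \<Rightarrow> head G (hd es))"

text \<open>Vectors of l2(F+(G)) are functions on path indices (supported on fpaths G);
  operators are maps on such functions.\<close>

type_synonym ('a,'b) fvec = "'a + 'b list \<Rightarrow> complex"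
type_synonym ('a,'b) fop = "('a,'b) fvec \<Rightarrow> ('a,'b) fvec"

definition ell2 :: "('a,'b) pre_digraph \<Rightarrow> ('a,'b) fvec set" where
  "ell2 G = {f. (\<forall>u. u \<notin> fpaths G \<longrightarrow> f u = 0) \<and>
                 (\<lambda>u. (cmod (f u))^2) summable_on UNIV}"

definition l2norm :: "('a,'b) fvec \<Rightarrow> real" where
  "l2norm f = sqrt (\<Sum>\<^sub>\<infinity>u. (cmod (f u))^2)"

text \<open>Left creation operator: L_e xi_w = xi_{ew} if s(e) = r(w), else 0.\<close>
definition Lop :: "('a,'b) pre_digraph \<Rightarrow> 'b \<Rightarrow> ('a,'b) fop" where
  "Lop G e = (\<lambda>f u. case u of
      Inl _ \<Rightarrow> 0
    | Inr es \<Rightarrow> (case es of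
         [] \<Rightarrow> 0
       | a # rest \<Rightarrow> (if a \<noteq> e then 0 else
           (case rest of
              [] \<Rightarrow> f (Inl (tail G e))
            | b # _ \<Rightarrow> (if tail G e = head G b then f (Inr rest) else 0)))))"

definition Pop :: "('a,'b) pre_digraph \<Rightarrow> 'a \<Rightarrow> ('a,'b) fop" where
  "Pop G v = (\<lambda>f u. if prange G u = v then f u else 0)"

definition op_add :: "('a,'b) fop \<Rightarrow> ('a,'b) fop \<Rightarrow> ('a,'b) fop" where
  "op_add A B = (\<lambda>f u. A f u + B f u)"

definition op_scale :: "complex \<Rightarrow> ('a,'b) fop \<Rightarrow> ('a,'b) fop" where
  "op_scale c A = (\<lambda>f u. c * A f u)"

definition bounded_op :: "('a,'b) pre_digraph \<Rightarrow> ('a,'b) fop \<Rightarrow> bool" where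
  "bounded_op G T \<longleftrightarrow> (\<forall>f\<in>ell2 G. T f \<in> ell2 G) \<and>
     (\<exists>K. \<forall>f\<in>ell2 G. l2norm (T f) \<le> K * l2norm f)"

definition opnorm :: "('a,'b) pre_digraph \<Rightarrow> ('a,'b) fop \<Rightarrow> real" where
  "opnorm G T = Sup {l2norm (T f) | f. f \<in> ell2 G \<and> l2norm f \<le> 1}"

inductive_set gen_alg :: "('a,'b) pre_digraph \<Rightarrow> ('a,'b) fop set" for G where
  gen_L: "e \<in> arcs G \<Longrightarrow> Lop G e \<in> gen_alg G"
| gen_P: "v \<in> verts G \<Longrightarrow> Pop G v \<in> gen_alg G"
| gen_add: "A \<in> gen_alg G \<Longrightarrow> B \<in> gen_alg G \<Longrightarrow> op_add A B \<in> gen_alg G"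
| gen_scale: "A \<in> gen_alg G \<Longrightarrow> op_scale c A \<in> gen_alg G"
| gen_mult: "A \<in> gen_alg G \<Longrightarrow> B \<in> gen_alg G \<Longrightarrow> A \<circ> B \<in> gen_alg G"

definition tensor_alg :: "('a,'b) pre_digraph \<Rightarrow> ('a,'b) fop set" where
  "tensor_alg G = {T. bounded_op G T \<and>
     (\<forall>\<epsilon>>0. \<exists>A\<in>gen_alg G. opnorm G (op_add T (op_scale (-1) A)) < \<epsilon>)}"

definition character :: "('a,'b) pre_digraph \<Rightarrow> (('a,'b) fop \<Rightarrow> complex) \<Rightarrow> bool" where
  "character G \<rho> \<longleftrightarrow>
     (\<forall>A\<in>tensor_alg G. \<forall>B\<in>tensor_alg G.
        \<rho> (op_add A B) = \<rho> A + \<rho> B \<and> \<rho> (A \<circ> B) = \<rho> A * \<rho> B) \<and>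
     (\<forall>A\<in>tensor_alg G. \<forall>c. \<rho> (op_scale c A) = c * \<rho> A) \<and>
     (\<exists>A\<in>tensor_alg G. \<rho> A \<noteq> 0)"

definition MGx :: "('a,'b) pre_digraph \<Rightarrow> 'a \<Rightarrow> (('a,'b) fop \<Rightarrow> complex) set" where
  "MGx G x = {\<rho>. character G \<rho> \<and> \<rho> (Pop G x) = 1}"

text \<open>Two-dimensional Hilbert space modelled as complex^2 with its standard
  inner product; N = complex line spanned by a nonzero vector n0.\<close>
definition cinner :: "complex^2 \<Rightarrow> complex^2 \<Rightarrow> complex" where
  "cinner x y = (\<Sum>i\<in>UNIV. x $ i * cnj (y $ i))"

definition cline :: "complex^2 \<Rightarrow> (complex^2) set" where
  "cline n0 = {c *s n0 | c. True}"

definition nest_alg :: "complex^2 \<Rightarrow> (complex^2^2) set" where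
  "nest_alg n0 = {M. \<forall>x\<in>cline n0. M *v x \<in> cline n0}"

definition nest_rep :: "('a,'b) pre_digraph \<Rightarrow> complex^2 \<Rightarrow> (('a,'b) fop \<Rightarrow> complex^2^2) \<Rightarrow> bool" where
  "nest_rep G n0 \<pi> \<longleftrightarrow> n0 \<noteq> 0 \<and>
     (\<forall>A\<in>tensor_alg G. \<forall>B\<in>tensor_alg G.
        \<pi> (op_add A B) = \<pi> A + \<pi> B \<and> \<pi> (A \<circ> B) = \<pi> A ** \<pi> B) \<and>
     (\<forall>A\<in>tensor_alg G. \<forall>c. \<pi> (op_scale c A) = (\<chi> i j. c * \<pi> A $ i $ j)) \<and>
     (\<exists>K. \<forall>A\<in>tensor_alg G. norm (\<pi> A) \<le> K * opnorm G A) \<and>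
     \<pi> ` tensor_alg G = nest_alg n0"

definition rho :: "complex^2 \<Rightarrow> (('a,'b) fop \<Rightarrow> complex^2^2) \<Rightarrow> ('a,'b) fop \<Rightarrow> complex" where
  "rho h \<pi> = (\<lambda>A. cinner (\<pi> A *v h) h)"

definition adapted_basis :: "complex^2 \<Rightarrow> complex^2 \<Rightarrow> complex^2 \<Rightarrow> bool" where
  "adapted_basis n0 h1 h2 \<longleftrightarrow> norm h1 = 1 \<and> norm h2 = 1 \<and> h2 \<in> cline n0 \<and>
     (\<forall>y\<in>cline n0. cinner h1 y = 0)"

definition rep2 :: "('a,'b) pre_digraph \<Rightarrow> 'a \<Rightarrow> 'a \<Rightarrow> (('a,'b) fop \<Rightarrow> complex^2^2) set" where
  "rep2 G x1 x2 = {\<pi>. \<exists>n0 h1 h2. nest_rep G n0 \<pi> \<and> adapted_basis n0 h1 h2 \<and>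
      rho h1 \<pi> \<in> MGx G x1 \<and> rho h2 \<pi> \<in> MGx G x2}"

end

theory Submission
  imports Defs
begin


lemma sum_inj_bound:
  fixes F :: "'y \<Rightarrow> real" and g :: "'x \<Rightarrow> real" and \<tau> :: "'x \<Rightarrow> 'y"
  assumes F: "F summable_on UNIV" "\<And>v. F v \<ge> 0" and inj: "inj_on \<tau> D"
    and out: "\<And>u. u \<notin> D \<Longrightarrow> g u = 0" and g0: "\<And>u. 0 \<le> g u"
    and le: "\<And>u. u \<in> D \<Longrightarrow> g u \<le> F (\<tau> u)"
  shows "g summable_on UNIV \<and> infsum g UNIV \<le> infsum F UNIV"
proof -
  have fin: "sum g S \<le> infsum F UNIV" if "finite S" for S
  proof -
    have "sum g S = sum g (S \<inter> D)"
      using that by (intro sum.mono_neutral_right) (auto simp: out)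
    also have "\<dots> \<le> sum (F \<circ> \<tau>) (S \<inter> D)"
      using le by (intro sum_mono) auto
    also have "\<dots> = sum F (\<tau> ` (S \<inter> D))"
      using inj by (subst sum.reindex) (auto intro: inj_on_subset)
    also have "\<dots> \<le> infsum F UNIV"
      using that F by (intro finite_sum_le_infsum) auto
    finally show ?thesis .
  qed
  have s: "g summable_on UNIV"
    by (rule nonneg_bdd_above_summable_on) (use g0 fin in \<open>auto intro!: bdd_aboveI\<close>)
  moreover have "infsum g UNIV \<le> infsum F UNIV"
    by (rule infsum_le_finite_sums[OF s]) (use fin in auto)
  ultimately show ?thesis by blast
qed

lemma l2norm_nonneg: "l2norm f \<ge> 0"
  unfolding l2norm_def by (simp add: infsum_nonneg)

lemma l2norm_sq: "(l2norm f)^2 = (\<Sum>\<^sub>\<infinity>u. (cmod (f u))^2)"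
  unfolding l2norm_def by (simp add: infsum_nonneg)

lemma l2norm_le_iff: "K \<ge> 0 \<Longrightarrow> l2norm f \<le> K \<longleftrightarrow> (\<Sum>\<^sub>\<infinity>u. (cmod (f u))^2) \<le> K^2"
  by (metis l2norm_nonneg l2norm_sq power_mono abs_of_nonneg real_le_rsqrt real_sqrt_abs l2norm_def)

lemma pt_le: assumes "f \<in> ell2 G" shows "cmod (f u) \<le> l2norm f"
proof -
  have s: "(\<lambda>u. (cmod (f u))^2) summable_on UNIV" using assms by (simp add: ell2_def)
  have "sum (\<lambda>u. (cmod (f u))^2) {u} \<le> (\<Sum>\<^sub>\<infinity>u. (cmod (f u))^2)"
    by (rule finite_sum_le_infsum[OF s]) auto
  then have "(cmod (f u))^2 \<le> (l2norm f)^2" by (simp add: l2norm_sq)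
  then show ?thesis using l2norm_nonneg by (meson power2_le_imp_le)
qed


lemma bop_normK: assumes "bounded_op G T"
  obtains K where "K \<ge> 0" "\<And>f. f \<in> ell2 G \<Longrightarrow> T f \<in> ell2 G"
    "\<And>f. f \<in> ell2 G \<Longrightarrow> l2norm (T f) \<le> K * l2norm f"
proof -
  obtain K where K: "\<forall>f\<in>ell2 G. l2norm (T f) \<le> K * l2norm f" using assms by (auto simp: bounded_op_def)
  have "l2norm (T f) \<le> max K 0 * l2norm f" if "f \<in> ell2 G" for f
  proof -
    have "K * l2norm f \<le> max K 0 * l2norm f" using l2norm_nonneg[of f] by (intro mult_right_mono) auto
    then show ?thesis using K that by (meson order_trans)
  qed
  moreover have "max K 0 \<ge> 0" by simp
  ultimately show ?thesis using that[of "max K 0"] assms by (auto simp: bounded_op_def)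
qed

lemma ell2_comp:
  assumes "f \<in> ell2 G" and sup: "\<And>u. u \<notin> fpaths G \<Longrightarrow> g u = 0"
    and inj: "inj_on \<tau> D" and out: "\<And>u. u \<notin> D \<Longrightarrow> g u = 0"
    and le: "\<And>u. u \<in> D \<Longrightarrow> (cmod (g u))^2 \<le> c * (cmod (f (\<tau> u)))^2" and c: "c \<ge> 0"
  shows "g \<in> ell2 G \<and> (l2norm g)^2 \<le> c * (l2norm f)^2"
proof -
  have fs: "(\<lambda>u. c * (cmod (f u))^2) summable_on UNIV"
    using assms(1) by (intro summable_on_cmult_right) (simp add: ell2_def)
  have r: "(\<lambda>u. (cmod (g u))^2) summable_on UNIV \<and> (\<Sum>\<^sub>\<infinity>u. (cmod (g u))^2) \<le> (\<Sum>\<^sub>\<infinity>u. c * (cmod (f u))^2)"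
    by (rule sum_inj_bound[OF fs _ inj]) (use c le out in auto)
  have "(\<Sum>\<^sub>\<infinity>u. c * (cmod (f u))^2) = c * (\<Sum>\<^sub>\<infinity>u. (cmod (f u))^2)"
    by (rule infsum_cmult_right) (use assms(1) in \<open>simp add: ell2_def\<close>)
  then show ?thesis using r sup by (simp add: ell2_def l2norm_sq)
qed

lemma sq_le_from_norm: assumes "K \<ge> 0" "l2norm g \<le> K * l2norm f"
  shows "(l2norm g)^2 \<le> K^2 * (l2norm f)^2"
  using assms l2norm_nonneg[of g] by (metis power_mono power_mult_distrib)

lemma norm_from_sq: assumes "c \<ge> 0" "(l2norm g)^2 \<le> c * (l2norm f)^2"
  shows "l2norm g \<le> sqrt c * l2norm f"
proof -
  have "(l2norm g)^2 \<le> (sqrt c * l2norm f)^2" using assms by (simp add: power_mult_distrib)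
  then show ?thesis using l2norm_nonneg[of f] assms(1) by (meson power2_le_imp_le mult_nonneg_nonneg real_sqrt_ge_zero)
qed

lemma bop_add: assumes "bounded_op G A" "bounded_op G B" shows "bounded_op G (op_add A B)"
proof -
  obtain KA where KA: "KA \<ge> 0" "\<And>f. f \<in> ell2 G \<Longrightarrow> A f \<in> ell2 G" "\<And>f. f \<in> ell2 G \<Longrightarrow> l2norm (A f) \<le> KA * l2norm f"
    using bop_normK[OF assms(1)] by blast
  obtain KB where KB: "KB \<ge> 0" "\<And>f. f \<in> ell2 G \<Longrightarrow> B f \<in> ell2 G" "\<And>f. f \<in> ell2 G \<Longrightarrow> l2norm (B f) \<le> KB * l2norm f"
    using bop_normK[OF assms(2)] by blast
  have main: "op_add A B f \<in> ell2 G \<and> l2norm (op_add A B f) \<le> sqrt (2*KA^2 + 2*KB^2) * l2norm f" if f: "f \<in> ell2 G" for f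
  proof -
    let ?a = "A f" and ?b = "B f"
    have a: "?a \<in> ell2 G" and b: "?b \<in> ell2 G" using KA KB f by auto
    have sa: "(\<lambda>u. (cmod (?a u))^2) summable_on UNIV" and sb: "(\<lambda>u. (cmod (?b u))^2) summable_on UNIV"
      using a b by (auto simp: ell2_def)
    have F: "(\<lambda>u. 2*(cmod (?a u))^2 + 2*(cmod (?b u))^2) summable_on UNIV"
      by (intro summable_on_add summable_on_cmult_right sa sb)
    have pt: "(cmod (?a u + ?b u))^2 \<le> 2*(cmod (?a u))^2 + 2*(cmod (?b u))^2" for u
    proof -
      have "cmod (?a u + ?b u) \<le> cmod (?a u) + cmod (?b u)" by (rule norm_triangle_ineq)
      then have "(cmod (?a u + ?b u))^2 \<le> (cmod (?a u) + cmod (?b u))^2" by (simp add: power_mono)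
      also have "\<dots> \<le> 2*(cmod (?a u))^2 + 2*(cmod (?b u))^2"
      proof -
        have "0 \<le> (cmod (?a u) - cmod (?b u))^2" by simp
        then show ?thesis by (simp add: power2_diff power2_sum)
      qed
      finally show ?thesis .
    qed
    have r: "(\<lambda>u. (cmod (?a u + ?b u))^2) summable_on UNIV \<and> (\<Sum>\<^sub>\<infinity>u. (cmod (?a u + ?b u))^2) \<le> (\<Sum>\<^sub>\<infinity>u. 2*(cmod (?a u))^2 + 2*(cmod (?b u))^2)"
      by (rule sum_inj_bound[OF F _ inj_on_id[of UNIV]]) (use pt in auto)
    have eq: "(\<Sum>\<^sub>\<infinity>u. 2*(cmod (?a u))^2 + 2*(cmod (?b u))^2) = 2*(l2norm ?a)^2 + 2*(l2norm ?b)^2"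
      by (simp add: infsum_add summable_on_cmult_right sa sb infsum_cmult_right l2norm_sq)
    have "(l2norm ?a)^2 \<le> KA^2 * (l2norm f)^2" "(l2norm ?b)^2 \<le> KB^2 * (l2norm f)^2"
      by (rule sq_le_from_norm; use KA KB f in auto)+
    have e2: "(l2norm (op_add A B f))^2 = (\<Sum>\<^sub>\<infinity>u. (cmod (?a u + ?b u))^2)"
      by (simp add: l2norm_sq op_add_def)
    have "(l2norm (op_add A B f))^2 \<le> 2*(l2norm ?a)^2 + 2*(l2norm ?b)^2"
      using r eq e2 by linarith
    then have "(l2norm (op_add A B f))^2 \<le> (2*KA^2 + 2*KB^2) * (l2norm f)^2"
      using \<open>(l2norm ?a)^2 \<le> KA^2 * (l2norm f)^2\<close> \<open>(l2norm ?b)^2 \<le> KB^2 * (l2norm f)^2\<close>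
      by (simp add: algebra_simps)
    then have "l2norm (op_add A B f) \<le> sqrt (2*KA^2 + 2*KB^2) * l2norm f"
      by (intro norm_from_sq) auto
    moreover have "op_add A B f \<in> ell2 G"
      using r a b by (auto simp: ell2_def op_add_def)
    ultimately show ?thesis by blast
  qed
  then show ?thesis unfolding bounded_op_def by blast
qed

lemma bop_scale: assumes "bounded_op G A" shows "bounded_op G (op_scale c A)"
proof -
  obtain K where K: "K \<ge> 0" "\<And>f. f \<in> ell2 G \<Longrightarrow> A f \<in> ell2 G" "\<And>f. f \<in> ell2 G \<Longrightarrow> l2norm (A f) \<le> K * l2norm f"
    using bop_normK[OF assms(1)] by blast
  have main: "op_scale c A f \<in> ell2 G \<and> l2norm (op_scale c A f) \<le> sqrt ((cmod c)^2 * K^2) * l2norm f" if f: "f \<in> ell2 G" for f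
  proof -
    have r: "op_scale c A f \<in> ell2 G \<and> (l2norm (op_scale c A f))^2 \<le> (cmod c)^2 * (l2norm (A f))^2"
      by (rule ell2_comp[OF K(2)[OF f] _ inj_on_id[of UNIV]]) (use K(2)[OF f] in \<open>auto simp: op_scale_def ell2_def norm_mult power_mult_distrib\<close>)
    have "(l2norm (A f))^2 \<le> K^2 * (l2norm f)^2" by (rule sq_le_from_norm) (use K f in auto)
    then have "(l2norm (op_scale c A f))^2 \<le> ((cmod c)^2 * K^2) * (l2norm f)^2"
      using r mult_left_mono[of "(l2norm (A f))^2" "K^2 * (l2norm f)^2" "(cmod c)^2"]
      by (simp add: mult.assoc)
    then show ?thesis using r by (intro conjI norm_from_sq) auto
  qed
  then show ?thesis unfolding bounded_op_def by blast
qed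

lemma bop_comp: assumes "bounded_op G A" "bounded_op G B" shows "bounded_op G (A \<circ> B)"
proof -
  obtain KA where KA: "KA \<ge> 0" "\<And>f. f \<in> ell2 G \<Longrightarrow> A f \<in> ell2 G" "\<And>f. f \<in> ell2 G \<Longrightarrow> l2norm (A f) \<le> KA * l2norm f"
    using bop_normK[OF assms(1)] by blast
  obtain KB where KB: "KB \<ge> 0" "\<And>f. f \<in> ell2 G \<Longrightarrow> B f \<in> ell2 G" "\<And>f. f \<in> ell2 G \<Longrightarrow> l2norm (B f) \<le> KB * l2norm f"
    using bop_normK[OF assms(2)] by blast
  have "l2norm (A (B f)) \<le> (KA*KB) * l2norm f" if "f \<in> ell2 G" for f
  proof -
    have "l2norm (A (B f)) \<le> KA * l2norm (B f)" using KA KB that by auto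
    also have "\<dots> \<le> KA * (KB * l2norm f)" using KA KB that by (intro mult_left_mono) auto
    finally show ?thesis by simp
  qed
  then show ?thesis using KA KB unfolding bounded_op_def by auto
qed

lemma bop_P: "bounded_op G (Pop G v)"
proof -
  have "Pop G v f \<in> ell2 G \<and> (l2norm (Pop G v f))^2 \<le> 1 * (l2norm f)^2" if f: "f \<in> ell2 G" for f
  proof -
    have fz: "\<And>u. u \<notin> fpaths G \<Longrightarrow> f u = 0" using f by (simp add: ell2_def)
    show ?thesis
      by (rule ell2_comp[OF f _ inj_on_id[of UNIV]]) (auto simp: Pop_def fz)
  qed
  then have "Pop G v f \<in> ell2 G \<and> l2norm (Pop G v f) \<le> 1 * l2norm f" if "f \<in> ell2 G" for f
    using that norm_from_sq[of 1] by (metis real_sqrt_one zero_le_one)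
  then show ?thesis unfolding bounded_op_def by blast
qed


lemma fpaths_cons:
  assumes "Inr rest \<in> fpaths G" "e \<in> arcs G" "tail G e = head G (hd rest)"
  shows "Inr (e # rest) \<in> fpaths G"
proof -
  from assms(1) obtain es where es: "Inr rest = Inr es" "es \<noteq> []" "set es \<subseteq> arcs G"
    "\<forall>i. Suc i < length es \<longrightarrow> tail G (es ! i) = head G (es ! Suc i)"
    unfolding fpaths_def by blast
  then have r: "rest \<noteq> []" "set rest \<subseteq> arcs G"
    "\<forall>i. Suc i < length rest \<longrightarrow> tail G (rest ! i) = head G (rest ! Suc i)" by simp_all
  have "\<forall>i. Suc i < length (e#rest) \<longrightarrow> tail G ((e#rest) ! i) = head G ((e#rest) ! Suc i)"
  proof (intro allI impI)
    fix i assume i: "Suc i < length (e#rest)"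
    show "tail G ((e#rest) ! i) = head G ((e#rest) ! Suc i)"
    proof (cases i)
      case 0 then show ?thesis using assms(3) r(1) by (simp add: hd_conv_nth)
    next
      case (Suc j) then show ?thesis using r(3) i by auto
    qed
  qed
  then show ?thesis using r assms(2) unfolding fpaths_def by (intro UnI2 CollectI exI[of _ "e#rest"]) simp
qed

lemma fpaths_single: "e \<in> arcs G \<Longrightarrow> Inr [e] \<in> fpaths G"
  unfolding fpaths_def by (intro UnI2 CollectI exI[of _ "[e]"]) simp

definition Ldom :: "('a,'b) pre_digraph \<Rightarrow> 'b \<Rightarrow> ('a + 'b list) set" where
  "Ldom G e = {u. \<exists>rest. u = Inr (e#rest) \<and> (rest = [] \<or> tail G e = head G (hd rest))}"

definition Ltau :: "('a,'b) pre_digraph \<Rightarrow> 'b \<Rightarrow> 'a + 'b list \<Rightarrow> 'a + 'b list" where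
  "Ltau G e u = (case u of Inr (x#rest) \<Rightarrow> (if rest = [] then Inl (tail G e) else Inr rest) | _ \<Rightarrow> u)"

lemma Lop_eval: "Lop G e f u = (if u \<in> Ldom G e then f (Ltau G e u) else 0)"
proof (cases u)
  case (Inl a) then show ?thesis by (simp add: Lop_def Ldom_def)
next
  case (Inr es) note u = this
  show ?thesis
  proof (cases es)
    case Nil then show ?thesis using u by (simp add: Lop_def Ldom_def)
  next
    case (Cons a rest)
    show ?thesis
    proof (cases "a = e")
      case False then show ?thesis using u Cons by (simp add: Lop_def Ldom_def)
    next
      case True
      show ?thesis
      proof (cases rest)
        case Nil then show ?thesis using u Cons True by (simp add: Lop_def Ldom_def Ltau_def)
      next
        case (Cons b r) then show ?thesis using u \<open>es = a # rest\<close> True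
          by (simp add: Lop_def Ldom_def Ltau_def)
      qed
    qed
  qed
qed

lemma Ltau_inj: "inj_on (Ltau G e) (Ldom G e)"
proof (rule inj_onI)
  fix u v assume u: "u \<in> Ldom G e" and v: "v \<in> Ldom G e" and eq: "Ltau G e u = Ltau G e v"
  obtain r1 where r1: "u = Inr (e#r1)" using u by (auto simp: Ldom_def)
  obtain r2 where r2: "v = Inr (e#r2)" using v by (auto simp: Ldom_def)
  have "Ltau G e u = (if r1 = [] then Inl (tail G e) else Inr r1)" by (simp add: r1 Ltau_def)
  moreover have "Ltau G e v = (if r2 = [] then Inl (tail G e) else Inr r2)" by (simp add: r2 Ltau_def)
  ultimately have "r1 = r2" using eq by (auto split: if_splits)
  then show "u = v" using r1 r2 by simp
qed

lemma bop_L: assumes e: "e \<in> arcs G" shows "bounded_op G (Lop G e)"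
proof -
  have "Lop G e f \<in> ell2 G \<and> (l2norm (Lop G e f))^2 \<le> 1 * (l2norm f)^2" if f: "f \<in> ell2 G" for f
  proof -
    have fz: "\<And>u. u \<notin> fpaths G \<Longrightarrow> f u = 0" using f by (simp add: ell2_def)
    have sup: "Lop G e f u = 0" if "u \<notin> fpaths G" for u
    proof (rule ccontr)
      assume nz: "Lop G e f u \<noteq> 0"
      then have uD: "u \<in> Ldom G e" and fnz: "f (Ltau G e u) \<noteq> 0" by (auto simp: Lop_eval split: if_splits)
      then obtain rest where u: "u = Inr (e#rest)" and c: "rest = [] \<or> tail G e = head G (hd rest)"
        by (auto simp: Ldom_def)
      have inf: "Ltau G e u \<in> fpaths G" using fnz fz by blast
      have "u \<in> fpaths G"
      proof (cases "rest = []")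
        case True then show ?thesis using u fpaths_single[OF e] by simp
      next
        case False
        then have "Inr rest \<in> fpaths G" using inf u by (simp add: Ltau_def split: list.splits)
        then show ?thesis using u c False fpaths_cons[OF _ e] by auto
      qed
      then show False using that by blast
    qed
    show ?thesis
      by (rule ell2_comp[OF f sup Ltau_inj]) (auto simp: Lop_eval)
  qed
  then have "Lop G e f \<in> ell2 G \<and> l2norm (Lop G e f) \<le> 1 * l2norm f" if "f \<in> ell2 G" for f
    using that norm_from_sq[of 1] by (metis real_sqrt_one zero_le_one)
  then show ?thesis unfolding bounded_op_def by blast
qed



lemma bop_gen: "A \<in> gen_alg G \<Longrightarrow> bounded_op G A"
proof (induction rule: gen_alg.induct)
  case (gen_L e) then show ?case by (rule bop_L)
next
  case (gen_P v) show ?case by (rule bop_P)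
next
  case (gen_add A B) then show ?case by (intro bop_add) simp_all
next
  case (gen_scale A c) then show ?case by (intro bop_scale) simp_all
next
  case (gen_mult A B) then show ?case by (intro bop_comp) simp_all
qed

lemma zero_ell2: "(\<lambda>u. 0) \<in> ell2 G" by (simp add: ell2_def)

lemma l2norm_zero: "l2norm (\<lambda>u. 0) = 0" by (simp add: l2norm_def)



lemma opnorm_zero: fixes G :: "('a,'b) pre_digraph" shows "opnorm G (\<lambda>f u. 0) = 0"
proof -
  have "\<exists>f::('a,'b) fvec. f \<in> ell2 G \<and> l2norm f \<le> 1"
    by (intro exI[of _ "\<lambda>u. 0"]) (simp add: zero_ell2 l2norm_zero)
  then have "{uu. uu = l2norm (\<lambda>u::'a+'b list. 0::complex) \<and> (\<exists>f::('a,'b) fvec. f \<in> ell2 G \<and> l2norm f \<le> 1)} = {0}"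
    by (simp add: l2norm_zero)
  then show ?thesis unfolding opnorm_def by simp
qed
lemma opnorm_bdd: assumes "bounded_op G T"
  shows "bdd_above {l2norm (T f) | f. f \<in> ell2 G \<and> l2norm f \<le> 1}"
proof -
  obtain K where K: "K \<ge> 0" "\<And>f. f \<in> ell2 G \<Longrightarrow> l2norm (T f) \<le> K * l2norm f"
    by (rule bop_normK[OF assms]) blast
  have "l2norm (T f) \<le> K" if "f \<in> ell2 G" "l2norm f \<le> 1" for f
  proof -
    have "l2norm (T f) \<le> K * l2norm f" using K(2)[OF that(1)] .
    also have "\<dots> \<le> K * 1" using mult_left_mono[OF that(2) K(1)] .
    finally show ?thesis by simp
  qed
  then show ?thesis
  proof (intro bdd_aboveI)
    fix x assume "x \<in> {l2norm (T f) | f. f \<in> ell2 G \<and> l2norm f \<le> 1}"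
    then obtain f where "x = l2norm (T f)" "f \<in> ell2 G" "l2norm f \<le> 1" by blast
    then show "x \<le> K" using \<open>\<And>f. f \<in> ell2 G \<Longrightarrow> l2norm f \<le> 1 \<Longrightarrow> l2norm (T f) \<le> K\<close> by simp
  qed
qed

lemma opnorm_upper: assumes "bounded_op G T" "f \<in> ell2 G" "l2norm f \<le> 1"
  shows "l2norm (T f) \<le> opnorm G T"
proof -
  have "l2norm (T f) \<in> {l2norm (T f) | f. f \<in> ell2 G \<and> l2norm f \<le> 1}" using assms(2,3) by blast
  then show ?thesis unfolding opnorm_def by (rule cSup_upper[OF _ opnorm_bdd[OF assms(1)]])
qed

lemma opnorm_nonneg: assumes "bounded_op G T" shows "opnorm G T \<ge> 0"
proof -
  have "l2norm (T (\<lambda>u. 0)) \<le> opnorm G T" by (rule opnorm_upper[OF assms zero_ell2]) (simp add: l2norm_zero)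
  then show ?thesis using l2norm_nonneg[of "T (\<lambda>u. 0)"] by linarith
qed

lemma gen_tensor: assumes "A \<in> gen_alg G" shows "A \<in> tensor_alg G"
proof -
  have eq: "op_add A (op_scale (-1) A) = (\<lambda>f u. 0)" unfolding op_add_def op_scale_def by (rule ext, rule ext) simp
  have z: "opnorm G (op_add A (op_scale (-1) A)) = 0" unfolding eq by (rule opnorm_zero)
  have "\<forall>\<epsilon>>0. \<exists>B\<in>gen_alg G. opnorm G (op_add A (op_scale (-1) B)) < \<epsilon>"
  proof (intro allI impI)
    fix \<epsilon> :: real assume "\<epsilon> > 0"
    then show "\<exists>B\<in>gen_alg G. opnorm G (op_add A (op_scale (-1) B)) < \<epsilon>"
      using z assms by (intro bexI[of _ A]) simp_all
  qed
  moreover have "bounded_op G A" by (rule bop_gen[OF assms])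
  ultimately show ?thesis by (simp add: tensor_alg_def)
qed

lemma tensor_bop: "T \<in> tensor_alg G \<Longrightarrow> bounded_op G T"
  by (simp add: tensor_alg_def)

lemma tensor_minus_gen: assumes T: "T \<in> tensor_alg G" and B: "B \<in> gen_alg G"
  shows "op_add T (op_scale (-1) B) \<in> tensor_alg G"
proof -
  have bT: "bounded_op G T" by (rule tensor_bop[OF T])
  have bB: "bounded_op G B" by (rule bop_gen[OF B])
  have bop: "bounded_op G (op_add T (op_scale (-1) B))"
    by (rule bop_add[OF bT bop_scale[OF bB]])
  have "\<exists>C\<in>gen_alg G. opnorm G (op_add (op_add T (op_scale (-1) B)) (op_scale (-1) C)) < \<epsilon>"
    if "\<epsilon> > 0" for \<epsilon>
  proof -
    obtain C' where C': "C' \<in> gen_alg G" "opnorm G (op_add T (op_scale (-1) C')) < \<epsilon>"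
    proof -
      have "\<forall>\<epsilon>>0. \<exists>A\<in>gen_alg G. opnorm G (op_add T (op_scale (-1) A)) < \<epsilon>"
        using T unfolding tensor_alg_def by simp
      then have "\<exists>A\<in>gen_alg G. opnorm G (op_add T (op_scale (-1) A)) < \<epsilon>"
        using \<open>\<epsilon> > 0\<close> by simp
      then show ?thesis using that by (elim bexE)
    qed
    let ?C = "op_add C' (op_scale (-1) B)"
    have inC: "?C \<in> gen_alg G" by (rule gen_add[OF C'(1) gen_scale[OF B]])
    have eq: "op_add (op_add T (op_scale (-1) B)) (op_scale (-1) ?C) = op_add T (op_scale (-1) C')"
      unfolding op_add_def op_scale_def by (rule ext, rule ext) (simp add: algebra_simps)
    show ?thesis using C'(2) unfolding eq[symmetric] by (rule bexI[OF _ inC])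
  qed
  then have "\<forall>\<epsilon>>0. \<exists>C\<in>gen_alg G. opnorm G (op_add (op_add T (op_scale (-1) B)) (op_scale (-1) C)) < \<epsilon>"
    by simp
  then show ?thesis using bop by (simp add: tensor_alg_def)
qed


lemma mv2: "((X::complex^2^2) *v (v::complex^2)) $ i = X$i$1 * v$1 + X$i$2 * v$2"
  by (simp add: matrix_vector_mult_def sum_2)

lemma mm2: "((X::complex^2^2) ** (Y::complex^2^2)) $ i $ j = X$i$1 * Y$1$j + X$i$2 * Y$2$j"
  by (simp add: matrix_matrix_mult_def sum_2)

lemma cinner2: "cinner x y = x$1 * cnj (y$1) + x$2 * cnj (y$2)"
  by (simp add: cinner_def sum_2)

lemma cinner_self: "cinner (x::complex^2) x = of_real ((norm x)^2)"
proof -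
  have "(norm x)^2 = (cmod (x$1))^2 + (cmod (x$2))^2"
    by (simp add: norm_vec_def L2_set_def sum_2)
  moreover have "cinner x x = of_real ((cmod (x$1))^2) + of_real ((cmod (x$2))^2)"
    by (simp only: cinner2 complex_norm_square)
  ultimately show ?thesis by simp
qed

lemma cinner_cnj: "cinner y x = cnj (cinner x y)" by (simp add: cinner2)

lemma cinner_lin: "cinner (a *s u + c *s w) z = a * cinner u z + c * cinner w z"
  by (simp add: cinner2 algebra_simps)

lemma cinner_scale: "cinner (a *s u) z = a * cinner u z"
  by (simp add: cinner2 algebra_simps)

lemma mv_lin: "(X::complex^2^2) *v (a *s u + c *s w) = a *s (X *v u) + c *s (X *v (w::complex^2))"
  by (simp add: vec_eq_iff mv2 algebra_simps)

lemma mv_scale: "(X::complex^2^2) *v (a *s u) = a *s (X *v (u::complex^2))"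
  by (simp add: vec_eq_iff mv2 algebra_simps)

lemma span2:
  assumes e11: "cinner h1 h1 = 1" and e22: "cinner h2 h2 = 1" and e12: "cinner h1 h2 = 0"
  shows "v = cinner v h1 *s h1 + cinner v h2 *s (h2::complex^2)"
proof -
  have e21: "cinner h2 h1 = 0" using e12 cinner_cnj[of h2 h1] by simp
  define a where "a = h1$1" define b where "b = h1$2" define c where "c = h2$1" define d where "d = h2$2"
  define a' where "a' = cnj (h1$1)" define b' where "b' = cnj (h1$2)"
  define c' where "c' = cnj (h2$1)" define d' where "d' = cnj (h2$2)"
  have f11: "a*a' + b*b' = 1" using e11 by (simp add: cinner2 a_def a'_def b_def b'_def)
  have f22: "c*c' + d*d' = 1" using e22 by (simp add: cinner2 c_def c'_def d_def d'_def)
  have f12: "a*c' + b*d' = 0" using e12 by (simp add: cinner2 a_def b_def c'_def d'_def)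
  have f21: "c*a' + d*b' = 0" using e21 by (simp add: cinner2 c_def d_def a'_def b'_def)
  have g1: "v$1 = (v$1*a' + v$2*b') * a + (v$1*c' + v$2*d') * c"
    using f11 f22 f12 f21 by algebra
  have g2: "v$2 = (v$1*a' + v$2*b') * b + (v$1*c' + v$2*d') * d"
    using f11 f22 f12 f21 by algebra
  have g1': "v$1 = cinner v h1 * h1$1 + cinner v h2 * h2$1"
    using g1 unfolding cinner2 a_def b_def c_def d_def a'_def b'_def c'_def d'_def .
  have g2': "v$2 = cinner v h1 * h1$2 + cinner v h2 * h2$2"
    using g2 unfolding cinner2 a_def b_def c_def d_def a'_def b'_def c'_def d'_def .
  show ?thesis
  proof (subst vec_eq_iff, rule allI)
    fix i :: 2
    have "(cinner v h1 *s h1 + cinner v h2 *s h2) $ i = cinner v h1 * h1$i + cinner v h2 * h2$i" by simp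
    moreover have "v$i = cinner v h1 * h1$i + cinner v h2 * h2$i" using exhaust_2[of i] g1' g2' by metis
    ultimately show "v $ i = (cinner v h1 *s h1 + cinner v h2 *s h2) $ i" by simp
  qed
qed


definition co :: "complex^2 \<Rightarrow> complex^2 \<Rightarrow> complex^2^2 \<Rightarrow> complex" where
  "co u w X = cinner (X *v u) w"

lemma co_add: "co u w (X + Y) = co u w X + co u w Y"
  by (simp add: co_def cinner2 mv2 algebra_simps)

lemma co_diff: "co u w (X - Y) = co u w X - co u w Y"
  by (simp add: co_def cinner2 mv2 algebra_simps)

lemma co_scale: "co u w (\<chi> i j. k * X$i$j) = k * co u w X"
  by (simp add: co_def cinner2 mv2 algebra_simps)

lemma co_zero: "co u w 0 = 0"
  by (simp add: co_def cinner2 mv2)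

lemma ab_facts: assumes "adapted_basis n0 h1 h2"
  shows "cinner h1 h1 = 1" "cinner h2 h2 = 1" "cinner h1 h2 = 0" "cinner h2 h1 = 0"
proof -
  show "cinner h1 h1 = 1" using assms by (simp add: adapted_basis_def cinner_self)
  show "cinner h2 h2 = 1" using assms by (simp add: adapted_basis_def cinner_self)
  show "cinner h1 h2 = 0" using assms by (simp add: adapted_basis_def)
  then show "cinner h2 h1 = 0" using cinner_cnj[of h2 h1] by simp
qed

lemma nest_h2: assumes ab: "adapted_basis n0 h1 h2" and X: "X \<in> nest_alg n0"
  shows "X *v h2 = co h2 h2 X *s h2"
proof -
  have "h2 \<in> cline n0" using ab by (simp add: adapted_basis_def)
  then obtain k where k: "h2 = k *s n0" by (auto simp: cline_def)
  have "X *v h2 \<in> cline n0" using X \<open>h2 \<in> cline n0\<close> by (simp add: nest_alg_def)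
  then obtain m where m: "X *v h2 = m *s n0" by (auto simp: cline_def)
  have "k \<noteq> 0"
  proof
    assume "k = 0" then have "h2 = 0" using k by (simp add: vec_eq_iff)
    then show False using ab_facts(2)[OF ab] by (simp add: cinner2)
  qed
  have "(m / k) *s h2 = m *s n0" using k \<open>k \<noteq> 0\<close> by (simp add: vec_eq_iff)
  then have eq: "X *v h2 = (m / k) *s h2" using m by simp
  have "co h2 h2 X = m / k" unfolding co_def eq cinner_scale ab_facts(2)[OF ab] by simp
  then show ?thesis using eq by simp
qed

lemma nest_h1: assumes ab: "adapted_basis n0 h1 h2"
  shows "X *v h1 = co h1 h1 X *s h1 + co h1 h2 X *s h2"
  unfolding co_def by (rule span2[OF ab_facts(1-3)[OF ab]])

lemma co_mult: assumes ab: "adapted_basis n0 h1 h2" and X: "X \<in> nest_alg n0" and Y: "Y \<in> nest_alg n0"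
  shows "co h1 h1 (X ** Y) = co h1 h1 X * co h1 h1 Y"
    "co h2 h2 (X ** Y) = co h2 h2 X * co h2 h2 Y"
    "co h1 h2 (X ** Y) = co h1 h1 Y * co h1 h2 X + co h1 h2 Y * co h2 h2 X"
proof -
  note o = ab_facts[OF ab]
  have "(X ** Y) *v h1 = X *v (Y *v h1)" by (simp add: matrix_vector_mul_assoc)
  also have "\<dots> = X *v (co h1 h1 Y *s h1 + co h1 h2 Y *s h2)" using nest_h1[OF ab] by metis
  also have "\<dots> = co h1 h1 Y *s (X *v h1) + co h1 h2 Y *s (X *v h2)" by (rule mv_lin)
  also have "\<dots> = co h1 h1 Y *s (co h1 h1 X *s h1 + co h1 h2 X *s h2) + co h1 h2 Y *s (co h2 h2 X *s h2)"
    using nest_h1[OF ab, of X] nest_h2[OF ab X] by simp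
  also have "\<dots> = (co h1 h1 Y * co h1 h1 X) *s h1 + (co h1 h1 Y * co h1 h2 X + co h1 h2 Y * co h2 h2 X) *s h2"
    by (simp add: vec_eq_iff algebra_simps)
  finally have e1: "(X ** Y) *v h1 = (co h1 h1 Y * co h1 h1 X) *s h1 + (co h1 h1 Y * co h1 h2 X + co h1 h2 Y * co h2 h2 X) *s h2" .
  show "co h1 h1 (X ** Y) = co h1 h1 X * co h1 h1 Y"
    unfolding co_def e1 cinner_lin o by simp
  show "co h1 h2 (X ** Y) = co h1 h1 Y * co h1 h2 X + co h1 h2 Y * co h2 h2 X"
    unfolding co_def e1 cinner_lin o by simp
  have "(X ** Y) *v h2 = X *v (Y *v h2)" by (simp add: matrix_vector_mul_assoc)
  also have "\<dots> = X *v (co h2 h2 Y *s h2)" using nest_h2[OF ab Y] by simp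
  also have "\<dots> = co h2 h2 Y *s (X *v h2)" by (rule mv_scale)
  also have "\<dots> = (co h2 h2 Y * co h2 h2 X) *s h2" using nest_h2[OF ab X] by simp
  finally have e2: "(X ** Y) *v h2 = (co h2 h2 Y * co h2 h2 X) *s h2" .
  show "co h2 h2 (X ** Y) = co h2 h2 X * co h2 h2 Y"
    unfolding co_def e2 cinner_scale o by simp
qed


lemma zero_fun_eq: "(\<lambda>f u. 0) = op_scale 0 (Pop G v)"
  unfolding op_scale_def by simp

lemma cinner_zero: "cinner 0 z = 0" by (simp add: cinner2)

lemma Pop_orth: "v \<noteq> w \<Longrightarrow> Pop G v \<circ> Pop G w = (\<lambda>f u. 0)"
  by (rule ext, rule ext) (simp add: Pop_def)

lemma Pop_idem: "Pop G v \<circ> Pop G v = Pop G v"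
  by (rule ext, rule ext) (simp add: Pop_def)

lemma PL: "Pop G (head G e) \<circ> Lop G e = Lop G e"
proof (rule ext, rule ext)
  fix f u
  show "(Pop G (head G e) \<circ> Lop G e) f u = Lop G e f u"
  proof (cases "u \<in> Ldom G e")
    case True
    then obtain rest where "u = Inr (e#rest)" by (auto simp: Ldom_def)
    then show ?thesis by (simp add: Pop_def prange_def)
  next
    case False then show ?thesis by (simp add: Pop_def Lop_eval)
  qed
qed

lemma LP: "Lop G e \<circ> Pop G (tail G e) = Lop G e"
proof (rule ext, rule ext)
  fix f u
  show "(Lop G e \<circ> Pop G (tail G e)) f u = Lop G e f u"
  proof (cases "u \<in> Ldom G e")
    case True
    then obtain rest where u: "u = Inr (e#rest)" and c: "rest = [] \<or> tail G e = head G (hd rest)"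
      by (auto simp: Ldom_def)
    have "prange G (Ltau G e u) = tail G e"
    proof (cases rest)
      case Nil then show ?thesis using u by (simp add: Ltau_def prange_def)
    next
      case (Cons b r) then show ?thesis using u c by (simp add: Ltau_def prange_def)
    qed
    then show ?thesis using True by (simp add: Pop_def Lop_eval)
  next
    case False then show ?thesis by (simp add: Lop_eval)
  qed
qed

lemma neg_scale_mat: "(\<chi> i j. (-1) * (X::complex^2^2)$i$j) = - X"
  by (simp add: vec_eq_iff)

lemma part_a:
  assumes wf: "wf_digraph G" and x1: "x1 \<in> verts G" and x2: "x2 \<in> verts G" and ne: "x1 \<noteq> x2"
    and nr: "nest_rep G n0 \<pi>" and ab: "adapted_basis n0 h1 h2"
    and r1: "rho h1 \<pi> \<in> MGx G x1" and r2: "rho h2 \<pi> \<in> MGx G x2"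
  shows "\<exists>e\<in>arcs G. tail G e = x1 \<and> head G e = x2"
proof (rule ccontr)
  assume noe: "\<not> (\<exists>e\<in>arcs G. tail G e = x1 \<and> head G e = x2)"
  have hom: "\<And>A B. A \<in> tensor_alg G \<Longrightarrow> B \<in> tensor_alg G \<Longrightarrow> \<pi> (op_add A B) = \<pi> A + \<pi> B"
    using nr unfolding nest_rep_def by blast
  have homm: "\<And>A B. A \<in> tensor_alg G \<Longrightarrow> B \<in> tensor_alg G \<Longrightarrow> \<pi> (A \<circ> B) = \<pi> A ** \<pi> B"
    using nr unfolding nest_rep_def by blast
  have sc: "\<And>A c. A \<in> tensor_alg G \<Longrightarrow> \<pi> (op_scale c A) = (\<chi> i j. c * \<pi> A $ i $ j)"
    using nr unfolding nest_rep_def by blast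
  obtain K where K: "\<And>A. A \<in> tensor_alg G \<Longrightarrow> norm (\<pi> A) \<le> K * opnorm G A"
    using nr unfolding nest_rep_def by blast
  have img: "\<pi> ` tensor_alg G = nest_alg n0" using nr unfolding nest_rep_def by blast
  have inN: "\<And>A. A \<in> tensor_alg G \<Longrightarrow> \<pi> A \<in> nest_alg n0" using img by blast
  define a where "a = (\<lambda>A. co h1 h1 (\<pi> A))"
  define c where "c = (\<lambda>A. co h1 h2 (\<pi> A))"
  define d where "d = (\<lambda>A. co h2 h2 (\<pi> A))"
  have mult: "a (A \<circ> B) = a A * a B" "d (A \<circ> B) = d A * d B" "c (A \<circ> B) = a B * c A + c B * d A"
    if "A \<in> tensor_alg G" "B \<in> tensor_alg G" for A B
    using co_mult[OF ab inN[OF that(1)] inN[OF that(2)]] homm[OF that] by (simp_all add: a_def c_def d_def)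
  have PT: "\<And>v. v \<in> verts G \<Longrightarrow> Pop G v \<in> tensor_alg G" by (rule gen_tensor[OF gen_P])
  have LT: "\<And>e. e \<in> arcs G \<Longrightarrow> Lop G e \<in> tensor_alg G" by (rule gen_tensor[OF gen_L])
  have pz: "\<pi> (\<lambda>f u. 0) = 0"
  proof -
    have "\<pi> (\<lambda>f u. 0) = \<pi> (op_scale 0 (Pop G x1))" by (simp add: zero_fun_eq[of G x1])
    also have "\<dots> = 0" using sc[OF PT[OF x1], of 0] by (simp add: vec_eq_iff)
    finally show ?thesis .
  qed
  have z: "a (\<lambda>f u. 0) = 0" "c (\<lambda>f u. 0) = 0" "d (\<lambda>f u. 0) = 0"
    by (simp_all add: a_def c_def d_def pz co_zero)
  have a1: "a (Pop G x1) = 1" using r1 by (simp add: MGx_def rho_def a_def co_def)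
  have d2: "d (Pop G x2) = 1" using r2 by (simp add: MGx_def rho_def d_def co_def)
  have aP0: "a (Pop G v) = 0" if "v \<in> verts G" "v \<noteq> x1" for v
  proof -
    have "a (Pop G v \<circ> Pop G x1) = a (Pop G v)" using mult(1)[OF PT[OF that(1)] PT[OF x1]] a1 by simp
    then show ?thesis using Pop_orth[OF that(2), of G] z by simp
  qed
  have dP0: "d (Pop G v) = 0" if "v \<in> verts G" "v \<noteq> x2" for v
  proof -
    have "d (Pop G v \<circ> Pop G x2) = d (Pop G v)" using mult(2)[OF PT[OF that(1)] PT[OF x2]] d2 by simp
    then show ?thesis using Pop_orth[OF that(2), of G] z by simp
  qed
  define p where "p = c (Pop G x1)"
  define q where "q = c (Pop G x2)"
  have pq: "p + q = 0"
  proof -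
    have "c (Pop G x2 \<circ> Pop G x1) = q + p"
      using mult(3)[OF PT[OF x2] PT[OF x1]] a1 d2 by (simp add: p_def q_def)
    then show ?thesis using Pop_orth[of x2 x1 G] ne z by (simp add: add.commute)
  qed
  have inv: "c B = a B * p + d B * q" if "B \<in> gen_alg G" for B
    using that
  proof (induction rule: gen_alg.induct)
    case (gen_L e)
    let ?r = "head G e" and ?s = "tail G e" and ?L = "Lop G e"
    have rV: "?r \<in> verts G" and sV: "?s \<in> verts G"
      using gen_L wf by (simp_all add: wf_digraph.head_in_verts wf_digraph.tail_in_verts)
    have L: "?L \<in> tensor_alg G" using LT[OF gen_L] .
    have m1: "a ?L = a (Pop G ?r) * a ?L" "d ?L = d (Pop G ?r) * d ?L"
        "c ?L = a ?L * c (Pop G ?r) + c ?L * d (Pop G ?r)"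
      using mult[OF PT[OF rV] L] PL[of G e] by simp_all
    have m2: "a ?L = a ?L * a (Pop G ?s)" "d ?L = d ?L * d (Pop G ?s)"
        "c ?L = a (Pop G ?s) * c ?L + c (Pop G ?s) * d ?L"
      using mult[OF L PT[OF sV]] LP[of G e] by simp_all
    show ?case
    proof (cases "a ?L \<noteq> 0")
      case True
      have "?r = x1"
      proof (rule ccontr)
        assume "?r \<noteq> x1" then have "a (Pop G ?r) = 0" using aP0 rV by simp
        then show False using m1(1) True by simp
      qed
      have "d (Pop G ?r) = 0" using dP0[OF rV] \<open>?r = x1\<close> ne by simp
      then have "d ?L = 0" using m1(2) by simp
      moreover have "c ?L = a ?L * p" using m1(3) \<open>d (Pop G ?r) = 0\<close> \<open>?r = x1\<close> by (simp add: p_def)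
      ultimately show ?thesis by simp
    next
      case False
      then have a0: "a ?L = 0" by simp
      show ?thesis
      proof (cases "d ?L \<noteq> 0")
        case True
        have "?s = x2"
        proof (rule ccontr)
          assume "?s \<noteq> x2" then have "d (Pop G ?s) = 0" using dP0 sV by simp
          then show False using m2(2) True by simp
        qed
        have "a (Pop G ?s) = 0" using aP0[OF sV] \<open>?s = x2\<close> ne by simp
        then have "c ?L = d ?L * q" using m2(3) \<open>?s = x2\<close> by (simp add: q_def)
        then show ?thesis using a0 by simp
      next
        case False
        then have d0: "d ?L = 0" by simp
        have "c ?L = 0"
        proof (rule ccontr)
          assume cn: "c ?L \<noteq> 0"
          have "d (Pop G ?r) = 1" using m1(3) a0 cn by simp
          then have "?r = x2" using dP0[OF rV] by fastforce
          have "a (Pop G ?s) = 1" using m2(3) d0 cn by simp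
          then have "?s = x1" using aP0[OF sV] by fastforce
          show False using noe gen_L \<open>?r = x2\<close> \<open>?s = x1\<close> by blast
        qed
        then show ?thesis using a0 d0 by simp
      qed
    qed
  next
    case (gen_P v)
    show ?case
    proof (cases "v = x1")
      case True then show ?thesis using a1 dP0[OF x1 ne] by (simp add: p_def)
    next
      case False note v1 = this
      show ?thesis
      proof (cases "v = x2")
        case True then show ?thesis using d2 aP0[OF x2] ne by (simp add: q_def)
      next
        case False
        have "c (Pop G v) = c (Pop G v \<circ> Pop G v)" by (simp add: Pop_idem)
        also have "\<dots> = 0" using mult(3)[OF PT[OF gen_P] PT[OF gen_P]] aP0[OF gen_P v1] dP0[OF gen_P False] by simp
        finally show ?thesis using aP0[OF gen_P v1] dP0[OF gen_P False] by simp
      qed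
    qed
  next
    case (gen_add A B)
    have AT: "A \<in> tensor_alg G" and BT: "B \<in> tensor_alg G" using gen_add gen_tensor by auto
    show ?case using gen_add.IH hom[OF AT BT] by (simp add: a_def c_def d_def co_add algebra_simps)
  next
    case (gen_scale A k)
    have AT: "A \<in> tensor_alg G" using gen_scale gen_tensor by auto
    show ?case using gen_scale.IH sc[OF AT, of k] by (simp add: a_def c_def d_def co_scale algebra_simps)
  next
    case (gen_mult A B)
    have AT: "A \<in> tensor_alg G" and BT: "B \<in> tensor_alg G" using gen_mult gen_tensor by auto
    have qp: "q = - p" using pq by (simp add: eq_neg_iff_add_eq_0 add.commute)
    show ?case unfolding mult[OF AT BT] gen_mult.IH qp by (simp add: algebra_simps)
  qed
  define \<Phi> where "\<Phi> = (\<lambda>X. co h1 h2 X - co h1 h1 X * p - co h2 h2 X * q)"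
  have \<Phi>diff: "\<Phi> (X - Y) = \<Phi> X - \<Phi> Y" for X Y by (simp add: \<Phi>_def co_diff algebra_simps)
  have ext: "\<Phi> (\<pi> A) = 0" if A: "A \<in> tensor_alg G" for A
  proof -
    define M where "M = max K 0"
    have "\<forall>n. \<exists>B. B \<in> gen_alg G \<and> opnorm G (op_add A (op_scale (-1) B)) < inverse (real (Suc n))"
    proof
      fix n :: nat
      have "\<forall>\<epsilon>>0. \<exists>B\<in>gen_alg G. opnorm G (op_add A (op_scale (-1) B)) < \<epsilon>"
        using A by (simp add: tensor_alg_def)
      then show "\<exists>B. B \<in> gen_alg G \<and> opnorm G (op_add A (op_scale (-1) B)) < inverse (real (Suc n))"
        by (metis inverse_positive_iff_positive of_nat_0_less_iff zero_less_Suc)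
    qed
    then obtain Bs where Bs: "\<And>n. Bs n \<in> gen_alg G" "\<And>n. opnorm G (op_add A (op_scale (-1) (Bs n))) < inverse (real (Suc n))"
      by metis
    have bnd: "norm (\<pi> A - \<pi> (Bs n)) \<le> M * inverse (real (Suc n))" for n
    proof -
      let ?D = "op_add A (op_scale (-1) (Bs n))"
      have DT: "?D \<in> tensor_alg G" by (rule tensor_minus_gen[OF A Bs(1)])
      have ST: "op_scale (-1) (Bs n) \<in> tensor_alg G" by (rule gen_tensor[OF gen_scale[OF Bs(1)]])
      have BT: "Bs n \<in> tensor_alg G" by (rule gen_tensor[OF Bs(1)])
      have eqD: "\<pi> ?D = \<pi> A - \<pi> (Bs n)" using hom[OF A ST] sc[OF BT, of "-1"] neg_scale_mat by simp
      have "norm (\<pi> A - \<pi> (Bs n)) \<le> K * opnorm G ?D" using K[OF DT] unfolding eqD .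
      moreover have "K * opnorm G ?D \<le> M * opnorm G ?D"
        using opnorm_nonneg[OF tensor_bop[OF DT]] by (intro mult_right_mono) (auto simp: M_def)
      moreover have "M * opnorm G ?D \<le> M * inverse (real (Suc n))"
        using Bs(2)[of n] by (intro mult_left_mono) (auto simp: M_def)
      ultimately show ?thesis by linarith
    qed
    have g0: "(\<lambda>n. M * inverse (real (Suc n))) \<longlonglongrightarrow> 0"
      using tendsto_mult[OF tendsto_const LIMSEQ_inverse_real_of_nat, of M] by simp
    have Y0: "(\<lambda>n. \<pi> A - \<pi> (Bs n)) \<longlonglongrightarrow> 0"
      by (rule Lim_null_comparison[OF _ g0]) (use bnd in simp)
    have cont: "(\<lambda>n. \<Phi> (\<pi> A - \<pi> (Bs n))) \<longlonglongrightarrow> \<Phi> 0"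
      unfolding \<Phi>_def co_def cinner2 mv2 by (intro tendsto_intros Y0)
    have "\<Phi> (\<pi> A - \<pi> (Bs n)) = \<Phi> (\<pi> A)" for n
      using \<Phi>diff inv[OF Bs(1)[of n]] by (simp add: \<Phi>_def a_def c_def d_def)
    then have "(\<lambda>n. \<Phi> (\<pi> A)) \<longlonglongrightarrow> \<Phi> 0" using cont by simp
    moreover have "\<Phi> 0 = 0" by (simp add: \<Phi>_def co_zero)
    ultimately show ?thesis using LIMSEQ_unique tendsto_const by metis
  qed
  define N0 where "N0 = (\<chi> i j. h2$i * cnj (h1$j))"
  have N0v: "N0 *v x = cinner x h1 *s h2" for x
    by (simp add: vec_eq_iff N0_def mv2 cinner2 algebra_simps)
  have "N0 \<in> nest_alg n0"
  proof -
    have "N0 *v x \<in> cline n0" if "x \<in> cline n0" for x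
    proof -
      have "cinner h1 x = 0" using ab that by (simp add: adapted_basis_def)
      then have "cinner x h1 = 0" using cinner_cnj[of x h1] by simp
      then have "N0 *v x = 0 *s n0" using N0v by simp
      then show ?thesis by (auto simp: cline_def)
    qed
    then show ?thesis by (simp add: nest_alg_def)
  qed
  then obtain A where A: "A \<in> tensor_alg G" "\<pi> A = N0" using img by (metis imageE)
  note o = ab_facts[OF ab]
  have "co h1 h2 N0 = 1" "co h1 h1 N0 = 0" "co h2 h2 N0 = 0"
    by (simp_all add: co_def N0v cinner_scale o cinner_zero)
  then have "\<Phi> (\<pi> A) = 1" using A by (simp add: \<Phi>_def)
  then show False using ext[OF A(1)] by simp
qed


definition bx :: "('a,'b) pre_digraph \<Rightarrow> 'b \<Rightarrow> 2 \<Rightarrow> 'a + 'b list" where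
  "bx G e j = (if j = 1 then Inl (tail G e) else Inr [e])"

definition vb :: "'a + 'b list \<Rightarrow> complex \<Rightarrow> ('a,'b) fvec" where
  "vb b c = (\<lambda>u. if u = b then c else 0)"

definition ent :: "('a,'b) pre_digraph \<Rightarrow> 'b \<Rightarrow> ('a,'b) fop \<Rightarrow> 2 \<Rightarrow> 2 \<Rightarrow> complex" where
  "ent G e T i j = T (vb (bx G e j) 1) (bx G e i)"

definition cpr :: "('a,'b) pre_digraph \<Rightarrow> 'b \<Rightarrow> ('a,'b) fop \<Rightarrow> bool" where
  "cpr G e T \<longleftrightarrow> (\<forall>g i. T g (bx G e i) = ent G e T i 1 * g (bx G e 1) + ent G e T i 2 * g (bx G e 2))
     \<and> ent G e T 1 2 = 0"

definition cprB :: "('a,'b) pre_digraph \<Rightarrow> 'b \<Rightarrow> ('a,'b) fop \<Rightarrow> bool" where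
  "cprB G e T \<longleftrightarrow> (\<forall>g i. g \<in> ell2 G \<longrightarrow> l2norm g \<le> 1 \<longrightarrow>
        T g (bx G e i) = ent G e T i 1 * g (bx G e 1) + ent G e T i 2 * g (bx G e 2))
     \<and> ent G e T 1 2 = 0"

lemma bx_inj: "bx G e i = bx G e j \<longleftrightarrow> i = j"
  using exhaust_2[of i] exhaust_2[of j] by (auto simp: bx_def)

lemma vb_bx: "vb (bx G e j) c (bx G e k) = (if k = j then c else 0)"
  by (simp add: vb_def bx_inj)

lemma vb_ell2: assumes "b \<in> fpaths G" shows "vb b c \<in> ell2 G" "l2norm (vb b c) = cmod c"
proof -
  let ?f = "\<lambda>u. (cmod (vb b c u))^2"
  have cn: "\<And>x. x \<in> UNIV - {b} \<Longrightarrow> ?f x = 0" by (simp add: vb_def)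
  have "?f summable_on {b}" by simp
  then have s: "?f summable_on UNIV" using summable_on_cong_neutral[of "{b}" UNIV ?f ?f] cn by auto
  have "infsum ?f UNIV = infsum ?f {b}" using infsum_cong_neutral[of "{b}" UNIV ?f ?f] cn by auto
  also have "\<dots> = (cmod c)^2" by (simp add: vb_def)
  finally have i: "infsum ?f UNIV = (cmod c)^2" .
  show "vb b c \<in> ell2 G" using s assms by (auto simp: ell2_def vb_def)
  show "l2norm (vb b c) = cmod c" using i by (simp add: l2norm_def)
qed

lemma bx_fp: assumes "wf_digraph G" "e \<in> arcs G" shows "bx G e j \<in> fpaths G"
proof -
  have "tail G e \<in> verts G" using assms by (simp add: wf_digraph.tail_in_verts)
  then have "Inl (tail G e) \<in> fpaths G" by (simp add: fpaths_def)
  then show ?thesis using fpaths_single[OF assms(2)] by (simp add: bx_def)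
qed

lemma ent_P: "ent G e (Pop G v) i j = (if i = j \<and> prange G (bx G e i) = v then 1 else 0)"
  by (auto simp: ent_def Pop_def vb_bx)

lemma cpr_P: "cpr G e (Pop G v)"
proof -
  have m: "Pop G v g (bx G e i) = ent G e (Pop G v) i 1 * g (bx G e 1) + ent G e (Pop G v) i 2 * g (bx G e 2)" for g i
  proof -
    have pp: "Pop G v g (bx G e i) = (if prange G (bx G e i) = v then g (bx G e i) else 0)" by (simp add: Pop_def)
    show ?thesis unfolding pp ent_P using exhaust_2[of i] by auto
  qed
  have "ent G e (Pop G v) 1 2 = 0" by (simp add: ent_P)
  then show ?thesis unfolding cpr_def by (intro conjI allI m)
qed

lemma cpr_L: "cpr G e (Lop G e')"
proof -
  have b1: "bx G e 1 \<notin> Ldom G e'" by (simp add: bx_def Ldom_def)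
  have b2: "bx G e 2 \<in> Ldom G e' \<longleftrightarrow> e' = e" by (auto simp: bx_def Ldom_def)
  have t2: "Ltau G e' (bx G e 2) = (if e' = e then bx G e 1 else Ltau G e' (bx G e 2))"
    by (simp add: bx_def Ltau_def)
  have ent: "ent G e (Lop G e') i j = (if i = 2 \<and> j = 1 \<and> e' = e then 1 else 0)" for i j
    using exhaust_2[of i] exhaust_2[of j] b1 b2 t2 by (auto simp: ent_def Lop_eval vb_bx)
  have m: "Lop G e' g (bx G e i) = ent G e (Lop G e') i 1 * g (bx G e 1) + ent G e (Lop G e') i 2 * g (bx G e 2)" for g i
    using exhaust_2[of i] b1 b2 t2 by (auto simp: ent Lop_eval)
  show ?thesis unfolding cpr_def by (intro conjI allI m) (simp add: ent)
qed

lemma cpr_gen: assumes "A \<in> gen_alg G" shows "cpr G e A"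
  using assms
proof (induction rule: gen_alg.induct)
  case (gen_L e') show ?case by (rule cpr_L)
next
  case (gen_P v) show ?case by (rule cpr_P)
next
  case (gen_add A B)
  have eA: "A g (bx G e i) = ent G e A i 1 * g (bx G e 1) + ent G e A i 2 * g (bx G e 2)" for g i
    using conjunct1[OF gen_add.IH(1)[unfolded cpr_def]] by blast
  have eB: "B g (bx G e i) = ent G e B i 1 * g (bx G e 1) + ent G e B i 2 * g (bx G e 2)" for g i
    using conjunct1[OF gen_add.IH(2)[unfolded cpr_def]] by blast
  have A12: "ent G e A 1 2 = 0" using conjunct2[OF gen_add.IH(1)[unfolded cpr_def]] .
  have B12: "ent G e B 1 2 = 0" using conjunct2[OF gen_add.IH(2)[unfolded cpr_def]] .
  have ee: "ent G e (op_add A B) i j = ent G e A i j + ent G e B i j" for i j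
    by (simp add: ent_def op_add_def)
  have m: "op_add A B g (bx G e i) = ent G e (op_add A B) i 1 * g (bx G e 1) + ent G e (op_add A B) i 2 * g (bx G e 2)" for g i
  proof -
    have "op_add A B g (bx G e i) = A g (bx G e i) + B g (bx G e i)" by (simp add: op_add_def)
    then show ?thesis unfolding ee eA eB by (simp add: algebra_simps)
  qed
  have "ent G e (op_add A B) 1 2 = 0" unfolding ee A12 B12 by simp
  then show ?case unfolding cpr_def by (intro conjI allI m)
next
  case (gen_scale A c)
  have eA: "A g (bx G e i) = ent G e A i 1 * g (bx G e 1) + ent G e A i 2 * g (bx G e 2)" for g i
    using conjunct1[OF gen_scale.IH[unfolded cpr_def]] by blast
  have A12: "ent G e A 1 2 = 0" using conjunct2[OF gen_scale.IH[unfolded cpr_def]] .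
  have ee: "ent G e (op_scale c A) i j = c * ent G e A i j" for i j
    by (simp add: ent_def op_scale_def)
  have m: "op_scale c A g (bx G e i) = ent G e (op_scale c A) i 1 * g (bx G e 1) + ent G e (op_scale c A) i 2 * g (bx G e 2)" for g i
  proof -
    have "op_scale c A g (bx G e i) = c * A g (bx G e i)" by (simp add: op_scale_def)
    then show ?thesis unfolding ee eA by (simp add: algebra_simps)
  qed
  have "ent G e (op_scale c A) 1 2 = 0" unfolding ee A12 by simp
  then show ?case unfolding cpr_def by (intro conjI allI m)
next
  case (gen_mult A B)
  have eA: "A g (bx G e i) = ent G e A i 1 * g (bx G e 1) + ent G e A i 2 * g (bx G e 2)" for g i
    using conjunct1[OF gen_mult.IH(1)[unfolded cpr_def]] by blast
  have eB: "B g (bx G e i) = ent G e B i 1 * g (bx G e 1) + ent G e B i 2 * g (bx G e 2)" for g i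
    using conjunct1[OF gen_mult.IH(2)[unfolded cpr_def]] by blast
  have A12: "ent G e A 1 2 = 0" using conjunct2[OF gen_mult.IH(1)[unfolded cpr_def]] .
  have B12: "ent G e B 1 2 = 0" using conjunct2[OF gen_mult.IH(2)[unfolded cpr_def]] .
  have entAB: "ent G e (A \<circ> B) i j = ent G e A i 1 * ent G e B 1 j + ent G e A i 2 * ent G e B 2 j" for i j
  proof -
    have "ent G e (A \<circ> B) i j = A (B (vb (bx G e j) 1)) (bx G e i)" by (simp add: ent_def)
    also have "\<dots> = ent G e A i 1 * B (vb (bx G e j) 1) (bx G e 1) + ent G e A i 2 * B (vb (bx G e j) 1) (bx G e 2)"
      by (rule eA)
    also have "\<dots> = ent G e A i 1 * ent G e B 1 j + ent G e A i 2 * ent G e B 2 j" by (simp add: ent_def)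
    finally show ?thesis .
  qed
  have m: "(A \<circ> B) g (bx G e i) = ent G e (A \<circ> B) i 1 * g (bx G e 1) + ent G e (A \<circ> B) i 2 * g (bx G e 2)" for g i
  proof -
    have "(A \<circ> B) g (bx G e i) = A (B g) (bx G e i)" by simp
    then show ?thesis unfolding entAB eA[of _ i] eB by (simp add: algebra_simps)
  qed
  have "ent G e (A \<circ> B) 1 2 = 0" unfolding entAB A12 B12 by simp
  then show ?case unfolding cpr_def by (intro conjI allI m)
qed


lemma pt_op: assumes "bounded_op G D" "h \<in> ell2 G" "l2norm h \<le> 1"
  shows "cmod (D h u) \<le> opnorm G D"
proof -
  have "D h \<in> ell2 G" using assms(1,2) by (simp add: bounded_op_def)
  then have "cmod (D h u) \<le> l2norm (D h)" by (rule pt_le)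
  also have "\<dots> \<le> opnorm G D" by (rule opnorm_upper[OF assms])
  finally show ?thesis .
qed

lemma small_zero: assumes "\<And>\<epsilon>::real. \<epsilon> > 0 \<Longrightarrow> cmod z < 3 * \<epsilon>" shows "z = 0"
proof (rule ccontr)
  assume "z \<noteq> 0"
  then have "cmod z / 3 > 0" by simp
  from assms[OF this] show False by simp
qed

lemma dd_ell2: assumes "wf_digraph G" "e \<in> arcs G"
  shows "vb (bx G e k) c \<in> ell2 G" "l2norm (vb (bx G e k) c) = cmod c"
  using vb_ell2[OF bx_fp[OF assms]] by auto

lemma approx_pt: assumes T: "T \<in> tensor_alg G" and eps: "\<epsilon> > 0"
  obtains B where "B \<in> gen_alg G" "\<And>h u. h \<in> ell2 G \<Longrightarrow> l2norm h \<le> 1 \<Longrightarrow> cmod (T h u - B h u) < \<epsilon>"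
proof -
  have "\<forall>\<epsilon>>0. \<exists>A\<in>gen_alg G. opnorm G (op_add T (op_scale (-1) A)) < \<epsilon>"
    using T by (simp add: tensor_alg_def)
  then have "\<exists>A\<in>gen_alg G. opnorm G (op_add T (op_scale (-1) A)) < \<epsilon>" using eps by simp
  then obtain B where B: "B \<in> gen_alg G" "opnorm G (op_add T (op_scale (-1) B)) < \<epsilon>" by (elim bexE)
  have bD: "bounded_op G (op_add T (op_scale (-1) B))"
    by (rule bop_add[OF tensor_bop[OF T] bop_scale[OF bop_gen[OF B(1)]]])
  have "cmod (T h u - B h u) < \<epsilon>" if "h \<in> ell2 G" "l2norm h \<le> 1" for h u
  proof -
    have "cmod (op_add T (op_scale (-1) B) h u) \<le> opnorm G (op_add T (op_scale (-1) B))"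
      by (rule pt_op[OF bD that])
    moreover have "op_add T (op_scale (-1) B) h u = T h u - B h u" by (simp add: op_add_def op_scale_def)
    ultimately show ?thesis using B(2) by simp
  qed
  then show ?thesis using that B(1) by blast
qed

lemma cprB_tensor: assumes wf: "wf_digraph G" and e: "e \<in> arcs G" and T: "T \<in> tensor_alg G"
  shows "cprB G e T"
proof -
  have dd: "vb (bx G e k) 1 \<in> ell2 G" "l2norm (vb (bx G e k) 1) \<le> 1" for k
    using dd_ell2[OF wf e, of k 1] by auto
  have main1: "T g (bx G e i) = ent G e T i 1 * g (bx G e 1) + ent G e T i 2 * g (bx G e 2)"
    if g: "g \<in> ell2 G" "l2norm g \<le> 1" for g i
  proof -
    have gb: "cmod (g (bx G e k)) \<le> 1" for k using pt_le[OF g(1)] g(2) order_trans by blast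
    let ?E = "T g (bx G e i) - (ent G e T i 1 * g (bx G e 1) + ent G e T i 2 * g (bx G e 2))"
    have "cmod ?E < 3 * \<epsilon>" if eps: "\<epsilon> > 0" for \<epsilon>
    proof -
      obtain B where B: "B \<in> gen_alg G" "\<And>h u. h \<in> ell2 G \<Longrightarrow> l2norm h \<le> 1 \<Longrightarrow> cmod (T h u - B h u) < \<epsilon>"
        using approx_pt[OF T eps] by blast
      have cB: "B g (bx G e i) = ent G e B i 1 * g (bx G e 1) + ent G e B i 2 * g (bx G e 2)"
        using conjunct1[OF cpr_gen[OF B(1), of e, unfolded cpr_def]] by blast
      have E: "?E = (T g (bx G e i) - B g (bx G e i)) - (ent G e T i 1 - ent G e B i 1) * g (bx G e 1)
                 - (ent G e T i 2 - ent G e B i 2) * g (bx G e 2)"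
        unfolding cB by (simp add: algebra_simps)
      have t0: "cmod (T g (bx G e i) - B g (bx G e i)) < \<epsilon>" by (rule B(2)[OF g])
      have tk: "cmod ((ent G e T i k - ent G e B i k) * g (bx G e k)) < \<epsilon>" for k
      proof -
        have "cmod (ent G e T i k - ent G e B i k) < \<epsilon>" unfolding ent_def by (rule B(2)[OF dd])
        then show ?thesis using gb[of k] by (simp add: norm_mult) (smt (verit) mult_left_le norm_ge_zero)
      qed
      have "cmod ?E \<le> cmod (T g (bx G e i) - B g (bx G e i)) + cmod ((ent G e T i 1 - ent G e B i 1) * g (bx G e 1))
              + cmod ((ent G e T i 2 - ent G e B i 2) * g (bx G e 2))"
        unfolding E by (rule order_trans[OF norm_triangle_ineq4 add_right_mono[OF norm_triangle_ineq4]])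
      then show ?thesis using t0 tk[of 1] tk[of 2] by linarith
    qed
    then have "?E = 0" by (rule small_zero)
    then show ?thesis by simp
  qed
  have "ent G e T 1 2 = 0"
  proof (rule small_zero)
    fix \<epsilon> :: real assume "\<epsilon> > 0"
    obtain B where B: "B \<in> gen_alg G" "\<And>h u. h \<in> ell2 G \<Longrightarrow> l2norm h \<le> 1 \<Longrightarrow> cmod (T h u - B h u) < \<epsilon>"
      using approx_pt[OF T \<open>\<epsilon> > 0\<close>] by blast
    have "ent G e B 1 2 = 0" using conjunct2[OF cpr_gen[OF B(1), of e, unfolded cpr_def]] .
    then have "cmod (ent G e T 1 2) < \<epsilon>" using B(2)[OF dd, of 2 "bx G e 1"] by (simp add: ent_def)
    then show "cmod (ent G e T 1 2) < 3 * \<epsilon>" using \<open>\<epsilon> > 0\<close> by linarith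
  qed
  then show ?thesis using main1 unfolding cprB_def by blast
qed


definition piM :: "('a,'b) pre_digraph \<Rightarrow> 'b \<Rightarrow> ('a,'b) fop \<Rightarrow> complex^2^2" where
  "piM G e F = (\<chi> i j. Lim (at_right (0::real)) (\<lambda>t. F (vb (bx G e j) (of_real t)) (bx G e i) / of_real t))"

lemma Lim_ev: assumes "0 < \<delta>" "\<And>t. 0 < t \<Longrightarrow> t < \<delta> \<Longrightarrow> f t = c"
  shows "Lim (at_right (0::real)) f = c"
proof -
  have "eventually (\<lambda>t. f t = c) (at_right 0)"
    unfolding eventually_at_right_field using assms by (intro exI[of _ \<delta>]) auto
  from tendsto_Lim[OF trivial_limit_at_right_real tendsto_eventually[OF this]] show ?thesis by simp
qed

lemma cval: assumes wf: "wf_digraph G" and e: "e \<in> arcs G" and c: "cprB G e T" and t: "0 < t" "t \<le> 1"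
  shows "T (vb (bx G e j) (of_real t)) (bx G e i) = of_real t * ent G e T i j"
proof -
  let ?g = "vb (bx G e j) (of_real t)"
  have g: "?g \<in> ell2 G" "l2norm ?g \<le> 1" using dd_ell2[OF wf e, of j "of_real t"] t by auto
  have "T ?g (bx G e i) = ent G e T i 1 * ?g (bx G e 1) + ent G e T i 2 * ?g (bx G e 2)"
    using conjunct1[OF c[unfolded cprB_def]] g by blast
  then show ?thesis using exhaust_2[of j] by (auto simp: vb_bx)
qed

lemma piM_ent: assumes wf: "wf_digraph G" and e: "e \<in> arcs G" and T: "T \<in> tensor_alg G"
  shows "piM G e T $ i $ j = ent G e T i j"
proof -
  have c: "cprB G e T" by (rule cprB_tensor[OF wf e T])
  have "Lim (at_right (0::real)) (\<lambda>t. T (vb (bx G e j) (of_real t)) (bx G e i) / of_real t) = ent G e T i j"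
    by (rule Lim_ev[of 1]) (auto simp: cval[OF wf e c])
  then show ?thesis by (simp add: piM_def)
qed

lemma piM_add: assumes wf: "wf_digraph G" and e: "e \<in> arcs G" and A: "A \<in> tensor_alg G" and B: "B \<in> tensor_alg G"
  shows "piM G e (op_add A B) = piM G e A + piM G e B"
proof -
  have cA: "cprB G e A" by (rule cprB_tensor[OF wf e A])
  have cB: "cprB G e B" by (rule cprB_tensor[OF wf e B])
  have "Lim (at_right (0::real)) (\<lambda>t. op_add A B (vb (bx G e j) (of_real t)) (bx G e i) / of_real t) = ent G e A i j + ent G e B i j" for i j
    by (rule Lim_ev[of 1]) (auto simp: op_add_def cval[OF wf e cA] cval[OF wf e cB] field_simps)
  then show ?thesis by (simp add: vec_eq_iff piM_def[of G e "op_add A B"] piM_ent[OF wf e A] piM_ent[OF wf e B])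
qed

lemma piM_scale: assumes wf: "wf_digraph G" and e: "e \<in> arcs G" and A: "A \<in> tensor_alg G"
  shows "piM G e (op_scale c A) = (\<chi> i j. c * piM G e A $ i $ j)"
proof -
  have cA: "cprB G e A" by (rule cprB_tensor[OF wf e A])
  have "Lim (at_right (0::real)) (\<lambda>t. op_scale c A (vb (bx G e j) (of_real t)) (bx G e i) / of_real t) = c * ent G e A i j" for i j
    by (rule Lim_ev[of 1]) (auto simp: op_scale_def cval[OF wf e cA] field_simps)
  then show ?thesis by (simp add: vec_eq_iff piM_def[of G e "op_scale c A"] piM_ent[OF wf e A])
qed

lemma piM_mult: assumes wf: "wf_digraph G" and e: "e \<in> arcs G" and A: "A \<in> tensor_alg G" and B: "B \<in> tensor_alg G"
  shows "piM G e (A \<circ> B) = piM G e A ** piM G e B"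
proof -
  have cA: "cprB G e A" by (rule cprB_tensor[OF wf e A])
  have cB: "cprB G e B" by (rule cprB_tensor[OF wf e B])
  obtain KB where KB: "KB \<ge> 0" "\<And>f. f \<in> ell2 G \<Longrightarrow> B f \<in> ell2 G" "\<And>f. f \<in> ell2 G \<Longrightarrow> l2norm (B f) \<le> KB * l2norm f"
    by (rule bop_normK[OF tensor_bop[OF B]]) blast
  define \<delta> where "\<delta> = 1 / (KB + 1)"
  have \<delta>: "0 < \<delta>" "\<delta> \<le> 1" using KB(1) by (auto simp: \<delta>_def)
  have key: "(A \<circ> B) (vb (bx G e j) (of_real t)) (bx G e i) / of_real t = ent G e A i 1 * ent G e B 1 j + ent G e A i 2 * ent G e B 2 j"
    if t: "0 < t" "t < \<delta>" for t i j
  proof -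
    let ?g = "vb (bx G e j) (of_real t)"
    have g: "?g \<in> ell2 G" "l2norm ?g = t" using dd_ell2[OF wf e, of j "of_real t"] t \<delta> by auto
    have Bg: "B ?g \<in> ell2 G" by (rule KB(2)[OF g(1)])
    have "KB * t \<le> 1"
    proof -
      have "t * (KB + 1) < 1" using t KB(1) by (simp add: \<delta>_def field_simps)
      then show ?thesis using t by (simp add: algebra_simps)
    qed
    then have Bn: "l2norm (B ?g) \<le> 1" using KB(3)[OF g(1)] g(2) by simp
    have "A (B ?g) (bx G e i) = ent G e A i 1 * B ?g (bx G e 1) + ent G e A i 2 * B ?g (bx G e 2)"
      using conjunct1[OF cA[unfolded cprB_def]] Bg Bn by blast
    also have "\<dots> = ent G e A i 1 * (of_real t * ent G e B 1 j) + ent G e A i 2 * (of_real t * ent G e B 2 j)"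
      using cval[OF wf e cB, of t j] t \<delta> by simp
    finally show ?thesis using t by (simp add: field_simps)
  qed
  have "Lim (at_right (0::real)) (\<lambda>t. (A \<circ> B) (vb (bx G e j) (of_real t)) (bx G e i) / of_real t)
        = ent G e A i 1 * ent G e B 1 j + ent G e A i 2 * ent G e B 2 j" for i j
    by (rule Lim_ev[OF \<delta>(1)]) (rule key)
  then show ?thesis
    by (simp add: vec_eq_iff piM_def[of G e "A \<circ> B"] mm2 piM_ent[OF wf e A] piM_ent[OF wf e B])
qed

lemma norm_vec2: "norm (x::('a::real_normed_vector)^2) \<le> norm (x$1) + norm (x$2)"
proof -
  have "norm x = L2_set (\<lambda>i. norm (x$i)) UNIV" by (simp add: norm_vec_def)
  also have "\<dots> \<le> sum (\<lambda>i. norm (x$i)) UNIV" by (rule L2_set_le_sum) simp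
  finally show ?thesis by (simp add: sum_2)
qed

lemma piM_bound: assumes wf: "wf_digraph G" and e: "e \<in> arcs G" and A: "A \<in> tensor_alg G"
  shows "norm (piM G e A) \<le> 4 * opnorm G A"
proof -
  have ij: "norm (piM G e A $ i $ j) \<le> opnorm G A" for i j
  proof -
    have "piM G e A $ i $ j = A (vb (bx G e j) 1) (bx G e i)" by (simp add: piM_ent[OF wf e A] ent_def)
    moreover have "cmod (A (vb (bx G e j) 1) (bx G e i)) \<le> opnorm G A"
      by (rule pt_op[OF tensor_bop[OF A]]) (use dd_ell2[OF wf e, of j 1] in auto)
    ultimately show ?thesis by simp
  qed
  have "norm (piM G e A) \<le> norm (piM G e A $ 1) + norm (piM G e A $ 2)" by (rule norm_vec2)
  also have "\<dots> \<le> (norm (piM G e A $ 1 $ 1) + norm (piM G e A $ 1 $ 2)) + (norm (piM G e A $ 2 $ 1) + norm (piM G e A $ 2 $ 2))"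
    by (intro add_mono norm_vec2)
  also have "\<dots> \<le> 4 * opnorm G A" using ij[of 1 1] ij[of 1 2] ij[of 2 1] ij[of 2 2] by linarith
  finally show ?thesis .
qed


lemma ent_L: "ent G e (Lop G e) i j = (if i = 2 \<and> j = 1 then 1 else 0)"
proof -
  have b1: "bx G e 1 \<notin> Ldom G e" by (simp add: bx_def Ldom_def)
  have b2: "bx G e 2 \<in> Ldom G e" by (simp add: bx_def Ldom_def)
  have t2: "Ltau G e (bx G e 2) = bx G e 1" by (simp add: bx_def Ltau_def)
  show ?thesis using exhaust_2[of i] exhaust_2[of j] b1 b2 t2 by (auto simp: ent_def Lop_eval vb_bx)
qed

lemma ent_add: "ent G e (op_add A B) i j = ent G e A i j + ent G e B i j"
  by (simp add: ent_def op_add_def)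

lemma ent_scale: "ent G e (op_scale c A) i j = c * ent G e A i j"
  by (simp add: ent_def op_scale_def)

lemma part_b:
  assumes wf: "wf_digraph G" and e: "e \<in> arcs G" and t: "tail G e = x1" and h: "head G e = x2" and ne: "x1 \<noteq> x2"
  shows "rep2 G x1 x2 \<noteq> {}"
proof -
  define n0 :: "complex^2" where "n0 = (\<chi> i. if i = 2 then 1 else 0)"
  define h1 :: "complex^2" where "h1 = (\<chi> i. if i = 1 then 1 else 0)"
  define \<pi> where "\<pi> = piM G e"
  have x1: "x1 \<in> verts G" using wf e t by (auto simp: wf_digraph.tail_in_verts)
  have x2: "x2 \<in> verts G" using wf e h by (auto simp: wf_digraph.head_in_verts)
  have n0ne: "n0 \<noteq> 0" by (simp add: n0_def vec_eq_iff exI[of _ 2])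
  have nest_char: "M \<in> nest_alg n0 \<longleftrightarrow> M$1$2 = 0" for M :: "complex^2^2"
  proof
    assume M: "M \<in> nest_alg n0"
    have "n0 \<in> cline n0" unfolding cline_def by (rule CollectI, rule exI[of _ 1]) simp
    then have "M *v n0 \<in> cline n0" using M by (simp add: nest_alg_def)
    then obtain c where "M *v n0 = c *s n0" by (auto simp: cline_def)
    then have "(M *v n0) $ 1 = (c *s n0) $ 1" by simp
    then show "M$1$2 = 0" by (simp add: mv2 n0_def)
  next
    assume M12: "M$1$2 = 0"
    have "M *v x \<in> cline n0" if xin: "x \<in> cline n0" for x
    proof -
      obtain c where x: "x = c *s n0" using xin by (auto simp: cline_def)
      have "M *v x = (c * M$2$2) *s n0"
        unfolding vec_eq_iff
      proof
        fix i :: 2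
        show "(M *v x) $ i = ((c * M$2$2) *s n0) $ i" using exhaust_2[of i] M12 by (auto simp: x mv2 n0_def)
      qed
      then show ?thesis by (auto simp: cline_def)
    qed
    then show "M \<in> nest_alg n0" by (simp add: nest_alg_def)
  qed
  have PT: "Pop G v \<in> tensor_alg G" if "v \<in> verts G" for v by (rule gen_tensor[OF gen_P[OF that]])
  have pr1: "prange G (bx G e 1) = x1" using t by (simp add: bx_def prange_def)
  have pr2: "prange G (bx G e 2) = x2" using h by (simp add: bx_def prange_def)
  have img: "\<pi> ` tensor_alg G = nest_alg n0"
  proof
    show "\<pi> ` tensor_alg G \<subseteq> nest_alg n0"
    proof
      fix M assume "M \<in> \<pi> ` tensor_alg G"
      then obtain A where A: "A \<in> tensor_alg G" "M = \<pi> A" by blast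
      have "ent G e A 1 2 = 0" using conjunct2[OF cprB_tensor[OF wf e A(1), unfolded cprB_def]] .
      then show "M \<in> nest_alg n0" using A by (simp add: nest_char \<pi>_def piM_ent[OF wf e A(1)])
    qed
    show "nest_alg n0 \<subseteq> \<pi> ` tensor_alg G"
    proof
      fix M assume "M \<in> nest_alg n0"
      then have M12: "M$1$2 = 0" by (simp add: nest_char)
      define A where "A = op_add (op_scale (M$1$1) (Pop G x1)) (op_add (op_scale (M$2$2) (Pop G x2)) (op_scale (M$2$1) (Lop G e)))"
      have Ag: "A \<in> gen_alg G" unfolding A_def using x1 x2 e by (intro gen_alg.intros)
      have AT: "A \<in> tensor_alg G" by (rule gen_tensor[OF Ag])
      have eA: "ent G e A i j = M$1$1 * ent G e (Pop G x1) i j + (M$2$2 * ent G e (Pop G x2) i j + M$2$1 * ent G e (Lop G e) i j)" for i j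
        unfolding A_def ent_add ent_scale ..
      have e11: "ent G e A 1 1 = M $ 1 $ 1" unfolding eA ent_P ent_L pr1 pr2 using ne by simp
      have e12: "ent G e A 1 2 = M $ 1 $ 2" unfolding eA ent_P ent_L pr1 pr2 using M12 by simp
      have e21: "ent G e A 2 1 = M $ 2 $ 1" unfolding eA ent_P ent_L pr1 pr2 by simp
      have e22: "ent G e A 2 2 = M $ 2 $ 2" unfolding eA ent_P ent_L pr1 pr2 using ne by simp
      have "ent G e A i j = M $ i $ j" for i j
        using exhaust_2[of i] exhaust_2[of j] e11 e12 e21 e22 by metis
      then have "\<pi> A = M" unfolding vec_eq_iff \<pi>_def piM_ent[OF wf e AT] by simp
      then show "M \<in> \<pi> ` tensor_alg G" using AT by blast
    qed
  qed
  have nr: "nest_rep G n0 \<pi>"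
    unfolding nest_rep_def
  proof (intro conjI ballI allI)
    show "n0 \<noteq> 0" by (rule n0ne)
    show "\<pi> (op_add A B) = \<pi> A + \<pi> B" if "A \<in> tensor_alg G" "B \<in> tensor_alg G" for A B
      unfolding \<pi>_def by (rule piM_add[OF wf e that])
    show "\<pi> (A \<circ> B) = \<pi> A ** \<pi> B" if "A \<in> tensor_alg G" "B \<in> tensor_alg G" for A B
      unfolding \<pi>_def by (rule piM_mult[OF wf e that])
    show "\<pi> (op_scale c A) = (\<chi> i j. c * \<pi> A $ i $ j)" if "A \<in> tensor_alg G" for A c
      unfolding \<pi>_def by (rule piM_scale[OF wf e that])
    show "\<exists>K. \<forall>A\<in>tensor_alg G. norm (\<pi> A) \<le> K * opnorm G A"
      unfolding \<pi>_def using piM_bound[OF wf e] by blast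
    show "\<pi> ` tensor_alg G = nest_alg n0" by (rule img)
  qed
  have nh1: "norm h1 = 1" by (simp add: h1_def norm_vec_def L2_set_def sum_2)
  have nn0: "norm n0 = 1" by (simp add: n0_def norm_vec_def L2_set_def sum_2)
  have ab: "adapted_basis n0 h1 n0"
    unfolding adapted_basis_def
  proof (intro conjI ballI nh1 nn0)
    show "n0 \<in> cline n0" unfolding cline_def by (rule CollectI, rule exI[of _ 1]) simp
    show "cinner h1 y = 0" if "y \<in> cline n0" for y
      using that by (auto simp: cline_def cinner2 h1_def n0_def)
  qed
  have rho1: "rho h1 \<pi> A = \<pi> A $ 1 $ 1" for A by (simp add: rho_def cinner2 mv2 h1_def)
  have rho2: "rho n0 \<pi> A = \<pi> A $ 2 $ 2" for A by (simp add: rho_def cinner2 mv2 n0_def)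
  have z12: "\<pi> A $ 1 $ 2 = 0" if "A \<in> tensor_alg G" for A
    using img that nest_char by blast
  have hom: "\<pi> (op_add A B) = \<pi> A + \<pi> B" "\<pi> (A \<circ> B) = \<pi> A ** \<pi> B"
    if "A \<in> tensor_alg G" "B \<in> tensor_alg G" for A B
    unfolding \<pi>_def by (rule piM_add[OF wf e that], rule piM_mult[OF wf e that])
  have sc: "\<pi> (op_scale c A) = (\<chi> i j. c * \<pi> A $ i $ j)" if "A \<in> tensor_alg G" for A c
    unfolding \<pi>_def by (rule piM_scale[OF wf e that])
  have P1: "\<pi> (Pop G x1) $ 1 $ 1 = 1" by (simp add: \<pi>_def piM_ent[OF wf e PT[OF x1]] ent_P pr1)
  have P2: "\<pi> (Pop G x2) $ 2 $ 2 = 1" by (simp add: \<pi>_def piM_ent[OF wf e PT[OF x2]] ent_P pr2)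
  have m1: "rho h1 \<pi> \<in> MGx G x1"
    unfolding MGx_def character_def
  proof (intro CollectI conjI ballI allI)
    fix A B assume A: "A \<in> tensor_alg G" and B: "B \<in> tensor_alg G"
    show "rho h1 \<pi> (op_add A B) = rho h1 \<pi> A + rho h1 \<pi> B" by (simp add: rho1 hom[OF A B])
    show "rho h1 \<pi> (A \<circ> B) = rho h1 \<pi> A * rho h1 \<pi> B" by (simp add: rho1 hom[OF A B] mm2 z12[OF A])
  next
    fix A c assume A: "A \<in> tensor_alg G"
    show "rho h1 \<pi> (op_scale c A) = c * rho h1 \<pi> A" by (simp add: rho1 sc[OF A])
  next
    show "\<exists>A\<in>tensor_alg G. rho h1 \<pi> A \<noteq> 0" using PT[OF x1] P1 rho1 by force
    show "rho h1 \<pi> (Pop G x1) = 1" by (simp add: rho1 P1)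
  qed
  have m2: "rho n0 \<pi> \<in> MGx G x2"
    unfolding MGx_def character_def
  proof (intro CollectI conjI ballI allI)
    fix A B assume A: "A \<in> tensor_alg G" and B: "B \<in> tensor_alg G"
    show "rho n0 \<pi> (op_add A B) = rho n0 \<pi> A + rho n0 \<pi> B" by (simp add: rho2 hom[OF A B])
    show "rho n0 \<pi> (A \<circ> B) = rho n0 \<pi> A * rho n0 \<pi> B" by (simp add: rho2 hom[OF A B] mm2 z12[OF B])
  next
    fix A c assume A: "A \<in> tensor_alg G"
    show "rho n0 \<pi> (op_scale c A) = c * rho n0 \<pi> A" by (simp add: rho2 sc[OF A])
  next
    show "\<exists>A\<in>tensor_alg G. rho n0 \<pi> A \<noteq> 0" using PT[OF x2] P2 rho2 by force
    show "rho n0 \<pi> (Pop G x2) = 1" by (simp add: rho2 P2)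
  qed
  have "\<pi> \<in> rep2 G x1 x2" unfolding rep2_def using nr ab m1 m2 by blast
  then show ?thesis by blast
qed

theorem theorem2p6:
  fixes G :: "('a,'b) pre_digraph" and x1 x2 :: 'a
  assumes "wf_digraph G" and "countable (verts G)" and "countable (arcs G)"
    and "x1 \<in> verts G" and "x2 \<in> verts G" and "x1 \<noteq> x2"
  shows "(\<forall>n0 \<pi> h1 h2. nest_rep G n0 \<pi> \<and> adapted_basis n0 h1 h2 \<and>
            rho h1 \<pi> \<in> MGx G x1 \<and> rho h2 \<pi> \<in> MGx G x2
          \<longrightarrow> (\<exists>e\<in>arcs G. tail G e = x1 \<and> head G e = x2))
       \<and> (rep2 G x1 x2 \<noteq> {} \<longleftrightarrow> (\<exists>e\<in>arcs G. tail G e = x1 \<and> head G e = x2))"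
proof -
  have pa: "\<exists>e\<in>arcs G. tail G e = x1 \<and> head G e = x2"
    if "nest_rep G n0 \<pi>" "adapted_basis n0 h1 h2" "rho h1 \<pi> \<in> MGx G x1" "rho h2 \<pi> \<in> MGx G x2" for n0 \<pi> h1 h2
    by (rule part_a[OF assms(1) assms(4) assms(5) assms(6) that])
  have pb1: "\<exists>e\<in>arcs G. tail G e = x1 \<and> head G e = x2" if rne: "rep2 G x1 x2 \<noteq> {}"
  proof -
    obtain \<pi> where "\<pi> \<in> rep2 G x1 x2" using rne by blast
    then obtain n0 h1 h2 where "nest_rep G n0 \<pi>" "adapted_basis n0 h1 h2" "rho h1 \<pi> \<in> MGx G x1" "rho h2 \<pi> \<in> MGx G x2"
      unfolding rep2_def by blast
    then show ?thesis by (rule pa)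
  qed
  have pb2: "rep2 G x1 x2 \<noteq> {}" if ex: "\<exists>e\<in>arcs G. tail G e = x1 \<and> head G e = x2"
  proof -
    obtain e where "e \<in> arcs G" "tail G e = x1" "head G e = x2" using ex by blast
    then show ?thesis using part_b[OF assms(1)] assms(6) by blast
  qed
  show ?thesis using pa pb1 pb2 by blast
qed


end
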